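(* Suppose $|B|>|B|_c$. Then there exists a constant $C>0$ such that for every $v=(v_1,v_2)\in H^1(\Omega;\mathbb{R}^2)$, $\Omega=\mathbb{R}\times(-1,1)$, with $v(x_1,\pm1)=0$, $$\int_\Omega|B|^2|\partial_2v|^2dx-\int_{\mathbb{R}}g[\rho]|v_2(x_1,0)|^2dx_1\ge C^{-1}\big(\|v\|_{L^2}^2+\|\partial_2v\|_{L^2}^2\big).$$
   Context: $g>0$, $[\rho]>0$ constants; $|B|_c^2:=\sup\{g[\rho]\psi(0)^2/\int_{-1}^1|\psi'|^2dx_2: 0\ne\psi\in H_0^1((-1,1))\}$; norms are $L^2(\Omega)$ norms. *)

theory Defs
  imports "HOL-Analysis.Analysis"
begin

definition strip :: "(real \<times> real) set" where
  "strip = {x. -1 < snd x \<and> snd x < 1}"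

definition L2_strip :: "(real \<times> real \<Rightarrow> real \<times> real) \<Rightarrow> bool" where
  "L2_strip f \<longleftrightarrow> set_borel_measurable lborel strip f \<and>
     set_integrable lborel strip (\<lambda>x. (norm (f x))^2)"

definition test_fun_strip ::
  "(real \<times> real \<Rightarrow> real) \<Rightarrow> (real \<times> real \<Rightarrow> real) \<Rightarrow> (real \<times> real \<Rightarrow> real) \<Rightarrow> bool" where
  "test_fun_strip \<phi> \<phi>1 \<phi>2 \<longleftrightarrow>
     (\<forall>x. (\<phi> has_derivative (\<lambda>h. fst h * \<phi>1 x + snd h * \<phi>2 x)) (at x)) \<and>
     continuous_on UNIV \<phi>1 \<and> continuous_on UNIV \<phi>2 \<and>
     compact (closure {x. \<phi> x \<noteq> 0}) \<and> closure {x. \<phi> x \<noteq> 0} \<subseteq> strip"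

definition weak_d1 :: "(real \<times> real \<Rightarrow> real \<times> real) \<Rightarrow> (real \<times> real \<Rightarrow> real \<times> real) \<Rightarrow> bool" where
  "weak_d1 v w \<longleftrightarrow> (\<forall>\<phi> \<phi>1 \<phi>2. test_fun_strip \<phi> \<phi>1 \<phi>2 \<longrightarrow>
     (LINT x:strip|lborel. \<phi>1 x *\<^sub>R v x) = - (LINT x:strip|lborel. \<phi> x *\<^sub>R w x))"

definition weak_d2 :: "(real \<times> real \<Rightarrow> real \<times> real) \<Rightarrow> (real \<times> real \<Rightarrow> real \<times> real) \<Rightarrow> bool" where
  "weak_d2 v w \<longleftrightarrow> (\<forall>\<phi> \<phi>1 \<phi>2. test_fun_strip \<phi> \<phi>1 \<phi>2 \<longrightarrow>
     (LINT x:strip|lborel. \<phi>2 x *\<^sub>R v x) = - (LINT x:strip|lborel. \<phi> x *\<^sub>R w x))"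

text \<open>v in H^1(Omega;R^2) with weak derivatives d1v, d2v, v is (the representative that is)
  continuous in x2 on [-1,1] for a.e. x1, and has zero trace v(x1,+-1)=0.
  For such a representative the trace on {x2 = c} is v(x1,c).\<close>
definition H1_strip_zero_trace ::
  "(real \<times> real \<Rightarrow> real \<times> real) \<Rightarrow> (real \<times> real \<Rightarrow> real \<times> real) \<Rightarrow> (real \<times> real \<Rightarrow> real \<times> real) \<Rightarrow> bool" where
  "H1_strip_zero_trace v d1v d2v \<longleftrightarrow>
     L2_strip v \<and> L2_strip d1v \<and> L2_strip d2v \<and> weak_d1 v d1v \<and> weak_d2 v d2v \<and>
     (AE x1 in lborel. continuous_on {-1..1} (\<lambda>t. v (x1, t)) \<and> v (x1, -1) = 0 \<and> v (x1, 1) = 0)"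

definition test_fun_int :: "(real \<Rightarrow> real) \<Rightarrow> (real \<Rightarrow> real) \<Rightarrow> bool" where
  "test_fun_int \<phi> \<phi>' \<longleftrightarrow> (\<forall>x. (\<phi> has_real_derivative \<phi>' x) (at x)) \<and> continuous_on UNIV \<phi>' \<and>
     compact (closure {x. \<phi> x \<noteq> 0}) \<and> closure {x. \<phi> x \<noteq> 0} \<subseteq> {-1<..<1}"

definition H01_int :: "(real \<Rightarrow> real) \<Rightarrow> (real \<Rightarrow> real) \<Rightarrow> bool" where
  "H01_int \<psi> d\<psi> \<longleftrightarrow>
     set_borel_measurable lborel {-1<..<1} \<psi> \<and> set_integrable lborel {-1<..<1} (\<lambda>t. (\<psi> t)^2) \<and>
     set_borel_measurable lborel {-1<..<1} d\<psi> \<and> set_integrable lborel {-1<..<1} (\<lambda>t. (d\<psi> t)^2) \<and>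
     (\<forall>\<phi> \<phi>'. test_fun_int \<phi> \<phi>' \<longrightarrow>
        (LINT t:{-1<..<1}|lborel. \<phi>' t * \<psi> t) = - (LINT t:{-1<..<1}|lborel. \<phi> t * d\<psi> t)) \<and>
     continuous_on {-1..1} \<psi> \<and> \<psi> (-1) = 0 \<and> \<psi> 1 = 0"

definition Bc_sq :: "real \<Rightarrow> real \<Rightarrow> real" where
  "Bc_sq g rho = Sup {g * rho * (\<psi> 0)^2 / (LINT t:{-1<..<1}|lborel. (d\<psi> t)^2) | \<psi> d\<psi>.
      H01_int \<psi> d\<psi> \<and> (\<exists>t\<in>{-1<..<1}. \<psi> t \<noteq> 0)}"

definition Bc :: "real \<Rightarrow> real \<Rightarrow> real" where
  "Bc g rho = sqrt (Bc_sq g rho)"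

end

theory Submission
  imports Defs
begin

definition sm :: "real \<Rightarrow> real" where
  "sm s = (if s \<le> 0 then 0 else if 1 \<le> s then 1 else 3 * s^2 - 2 * s^3)"
definition dsm :: "real \<Rightarrow> real" where
  "dsm s = (if s \<le> 0 then 0 else if 1 \<le> s then 0 else 6 * s - 6 * s^2)"

lemma deriv_join:
  assumes "(f has_real_derivative D) (at x within {..x})" "(f has_real_derivative D) (at x within {x..})"
  shows "(f has_real_derivative D) (at x)"
proof -
  have "{..x} \<union> {x..} = UNIV" by auto
  then have "at x = at x within ({..x} \<union> {x..})" by simp
  then have eq: "at x = sup (at x within {..x}) (at x within {x..})" by (simp add: at_within_union)
  have "((\<lambda>y. (f y - f x) / (y - x)) \<longlongrightarrow> D) (at x)"
    unfolding eq using assms by (intro filterlim_sup) (simp_all add: has_field_derivative_iff)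
  then show ?thesis by (simp add: has_field_derivative_iff)
qed

lemma poly_deriv: "((\<lambda>s::real. 3 * s^2 - 2 * s^3) has_real_derivative (6 * s - 6 * s^2)) (at s within S)"
  by (auto intro!: derivative_eq_intros simp: algebra_simps power2_eq_square)

lemma sm_deriv: "(sm has_real_derivative dsm s) (at s)"
proof -
  consider "s < 0" | "s = 0" | "0 < s \<and> s < 1" | "s = 1" | "1 < s" by linarith
  then show ?thesis
  proof cases
    case 1
    show ?thesis
      by (rule has_field_derivative_transform_within_open[where f="\<lambda>_. 0" and S="{..<0}"])
         (use 1 in \<open>auto simp: sm_def dsm_def\<close>)
  next
    case 2
    show ?thesis
    proof (rule deriv_join)
      show "(sm has_real_derivative dsm s) (at s within {..s})"
        by (rule has_field_derivative_transform_within[where f="\<lambda>_. 0" and d=1])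
           (use 2 in \<open>auto simp: sm_def dsm_def\<close>)
      show "(sm has_real_derivative dsm s) (at s within {s..})"
        by (rule has_field_derivative_transform_within[OF poly_deriv[of s, THEN DERIV_cong], where d=1])
           (use 2 in \<open>auto simp: sm_def dsm_def dist_real_def\<close>)
    qed
  next
    case 3
    show ?thesis
      by (rule has_field_derivative_transform_within_open[OF poly_deriv[of s, THEN DERIV_cong], where S="{0<..<1}"])
         (use 3 in \<open>auto simp: sm_def dsm_def\<close>)
  next
    case 4
    show ?thesis
    proof (rule deriv_join)
      show "(sm has_real_derivative dsm s) (at s within {s..})"
        by (rule has_field_derivative_transform_within[where f="\<lambda>_. 1" and d=1])
           (use 4 in \<open>auto simp: sm_def dsm_def\<close>)
      show "(sm has_real_derivative dsm s) (at s within {..s})"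
        by (rule has_field_derivative_transform_within[OF poly_deriv[of s, THEN DERIV_cong], where d=1])
           (use 4 in \<open>auto simp: sm_def dsm_def dist_real_def\<close>)
    qed
  next
    case 5
    show ?thesis
      by (rule has_field_derivative_transform_within_open[where f="\<lambda>_. 1" and S="{1<..}"])
         (use 5 in \<open>auto simp: sm_def dsm_def\<close>)
  qed
qed

lemma dsm_cont: "continuous_on UNIV dsm"
proof -
  have eq: "dsm = (\<lambda>s. let r = max 0 (min 1 s) in 6 * r - 6 * r^2)"
    by (auto simp: dsm_def fun_eq_iff Let_def max_def min_def)
  show ?thesis unfolding eq Let_def by (intro continuous_intros)
qed

lemma sm_bounds: "0 \<le> sm s" "sm s \<le> 1"
proof -
  have "0 \<le> 3 * s^2 - 2 * s^3" "3 * s^2 - 2 * s^3 \<le> 1" if "0 < s" "s < 1"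
  proof -
    have "3 * s^2 - 2 * s^3 = s^2*(3 - 2 * s)" by (simp add: algebra_simps power2_eq_square power3_eq_cube)
    then show "0 \<le> 3 * s^2 - 2 * s^3" using that by simp
    have "1 - (3 * s^2 - 2 * s^3) = (1-s)^2*(1+2 * s)" by (simp add: algebra_simps power2_eq_square power3_eq_cube)
    then show "3 * s^2 - 2 * s^3 \<le> 1" using that by (smt (verit) mult_nonneg_nonneg zero_le_power2)
  qed
  then show "0 \<le> sm s" "sm s \<le> 1" by (auto simp: sm_def)
qed

lemma dsm_nonneg: "0 \<le> dsm s"
  by (auto simp: dsm_def) (smt (verit) mult_left_le_one_le power2_eq_square)

lemma dsm_zero: "s \<le> 0 \<or> 1 \<le> s \<Longrightarrow> dsm s = 0" by (auto simp: dsm_def)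
lemma sm_0: "s \<le> 0 \<Longrightarrow> sm s = 0" and sm_1: "1 \<le> s \<Longrightarrow> sm s = 1" by (auto simp: sm_def)

definition K :: "real \<Rightarrow> real \<Rightarrow> real \<Rightarrow> real" where
  "K c d t = dsm ((t - c) / d) / d"

definition tr :: "real \<Rightarrow> real \<Rightarrow> real \<Rightarrow> real \<Rightarrow> real" where
  "tr p q d t = sm ((t - (p - d)) / d) - sm ((t - q) / d)"

definition dtr :: "real \<Rightarrow> real \<Rightarrow> real \<Rightarrow> real \<Rightarrow> real" where
  "dtr p q d t = K (p - d) d t - K q d t"

lemma sm_aff_deriv: "d > 0 \<Longrightarrow> ((\<lambda>t. sm ((t - c) / d)) has_real_derivative K c d t) (at t within S)"
  unfolding K_def
  by (rule DERIV_chain2[OF sm_deriv, THEN has_field_derivative_at_within, THEN DERIV_cong])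
     (auto intro!: derivative_eq_intros)

lemma K_cont: "d > 0 \<Longrightarrow> continuous_on S (K c d)"
  unfolding K_def by (intro continuous_intros continuous_on_compose2[OF dsm_cont]) auto

lemma K_nonneg: "d > 0 \<Longrightarrow> 0 \<le> K c d t"
  unfolding K_def using dsm_nonneg by simp

lemma K_zero: "d > 0 \<Longrightarrow> t \<le> c \<or> c + d \<le> t \<Longrightarrow> K c d t = 0"
  unfolding K_def by (rule divide_eq_0_iff[THEN iffD2], rule disjI1, rule dsm_zero) (auto simp: field_simps)

lemma K_int: "d > 0 \<Longrightarrow> (LBINT t:{c..c+d}. K c d t) = 1"
proof -
  assume d: "d > 0"
  have "(LBINT t:{c..c+d}. K c d t) = sm ((c + d - c)/d) - sm ((c - c)/d)"
    unfolding set_lebesgue_integral_def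
    by (rule integral_FTC_atLeastAtMost) (use d sm_aff_deriv K_cont in \<open>auto simp: has_real_derivative_iff_has_vector_derivative[symmetric]\<close>)
  also have "\<dots> = 1" using d by (simp add: sm_0 sm_1)
  finally show ?thesis .
qed

lemma tr_deriv: "d > 0 \<Longrightarrow> (tr p q d has_real_derivative dtr p q d t) (at t)"
  unfolding tr_def[abs_def] dtr_def by (intro derivative_intros sm_aff_deriv)

lemma dtr_cont: "d > 0 \<Longrightarrow> continuous_on S (dtr p q d)"
  unfolding dtr_def[abs_def] by (intro continuous_intros K_cont[unfolded continuous_on_def, THEN bspec] continuous_on_diff K_cont) 

lemma sm_mono: "x \<le> y \<Longrightarrow> sm x \<le> sm y"
  by (rule DERIV_nonneg_imp_nondecreasing[of x y sm]) (use sm_deriv dsm_nonneg in blast)+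

lemma tr_bounds: "d > 0 \<Longrightarrow> p \<le> q \<Longrightarrow> 0 \<le> tr p q d t \<and> tr p q d t \<le> 1"
proof -
  assume a: "d > 0" "p \<le> q"
  then have "(t - q) / d \<le> (t - (p - d)) / d" by (simp add: divide_right_mono)
  then have "sm ((t - q) / d) \<le> sm ((t - (p - d)) / d)" by (rule sm_mono)
  then show ?thesis unfolding tr_def using sm_bounds[of "(t - (p - d)) / d"] sm_bounds[of "(t - q) / d"]
    by linarith
qed

lemma tr_zero: "d > 0 \<Longrightarrow> p \<le> q \<Longrightarrow> t \<le> p - d \<or> q + d \<le> t \<Longrightarrow> tr p q d t = 0"
  unfolding tr_def by (auto simp: sm_0 sm_1 field_simps)

lemma dtr_zero: "d > 0 \<Longrightarrow> p \<le> q \<Longrightarrow> t \<le> p - d \<or> q + d \<le> t \<Longrightarrow> dtr p q d t = 0"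
  unfolding dtr_def by (auto simp: K_zero)

lemma tr_one: "d > 0 \<Longrightarrow> p \<le> t \<Longrightarrow> t \<le> q \<Longrightarrow> tr p q d t = 1"
  unfolding tr_def by (auto simp: sm_0 sm_1 field_simps)

lemma dsm_le: "dsm s \<le> 3/2"
proof -
  have "6 * s - 6 * s^2 = 3/2 - 6 * (s - 1/2)^2" by (simp add: power2_eq_square algebra_simps)
  then have "6 * s - 6 * s^2 \<le> 3/2" by (smt (verit) zero_le_power2)
  then show ?thesis unfolding dsm_def by auto
qed

lemma dtr_bound: "d > 0 \<Longrightarrow> \<bar>dtr p q d t\<bar> \<le> 3 / d"
proof -
  assume d: "d > 0"
  have "0 \<le> K c d t" "K c d t \<le> 3/2 / d" for c
    using d K_nonneg[of d c t] dsm_le[of "(t - c)/d"] by (auto simp: K_def divide_right_mono field_simps)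
  from this[of "p-d"] this[of q] show ?thesis unfolding dtr_def by (simp add: abs_le_iff) 
qed

lemma tr_support: "d > 0 \<Longrightarrow> p \<le> q \<Longrightarrow> closure {t. tr p q d t \<noteq> 0} \<subseteq> {p-d..q+d}"
proof -
  assume a: "d > 0" "p \<le> q"
  have "{t. tr p q d t \<noteq> 0} \<subseteq> {p-d..q+d}"
  proof
    fix t assume "t \<in> {t. tr p q d t \<noteq> 0}"
    then show "t \<in> {p-d..q+d}" using tr_zero[OF a, of t] by force
  qed
  then show ?thesis by (rule closure_minimal) auto
qed

lemma tr_compact: "d > 0 \<Longrightarrow> p \<le> q \<Longrightarrow> compact (closure {t. tr p q d t \<noteq> 0})"
proof -
  assume a: "d > 0" "p \<le> q"
  have "closure {t. tr p q d t \<noteq> 0} = {p-d..q+d} \<inter> closure {t. tr p q d t \<noteq> 0}"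
    using tr_support[OF a] by blast
  then show ?thesis by (metis compact_Icc compact_Int_closed closed_closure)
qed

lemma K_integrable:
  assumes "d > 0" "continuous_on {c..c+d} u"
  shows "set_integrable lborel {c..c+d} (\<lambda>t. K c d t * u t)"
  by (rule borel_integrable_atLeastAtMost') (intro continuous_on_mult K_cont assms)

lemma K_err:
  fixes u :: "real \<Rightarrow> real"
  assumes d: "d > 0" and cu: "continuous_on {c..c+d} u"
    and e: "\<And>t. t \<in> {c..c+d} \<Longrightarrow> \<bar>u t - y\<bar> \<le> e"
  shows "\<bar>(LBINT t:{c..c+d}. K c d t * u t) - y\<bar> \<le> e"
proof -
  have i1: "set_integrable lborel {c..c+d} (\<lambda>t. K c d t * u t)" by (rule K_integrable[OF d cu])
  have i2: "set_integrable lborel {c..c+d} (\<lambda>t. K c d t * y)"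
    by (rule K_integrable[OF d]) simp
  have i3: "set_integrable lborel {c..c+d} (\<lambda>t. K c d t * e)"
    by (rule K_integrable[OF d]) simp
  have "(LBINT t:{c..c+d}. K c d t * u t) - y = (LBINT t:{c..c+d}. K c d t * u t) - (LBINT t:{c..c+d}. K c d t * y)"
    using K_int[OF d, of c] by simp
  also have "\<dots> = (LBINT t:{c..c+d}. K c d t * u t - K c d t * y)"
    by (rule set_integral_diff(2)[symmetric, OF i1 i2])
  finally have eq: "(LBINT t:{c..c+d}. K c d t * u t) - y = (LBINT t:{c..c+d}. K c d t * u t - K c d t * y)" .
  have i4: "set_integrable lborel {c..c+d} (\<lambda>t. K c d t * u t - K c d t * y)"
    using i1 i2 by (rule set_integral_diff(1))
  have "(LBINT t:{c..c+d}. K c d t * u t - K c d t * y) \<le> (LBINT t:{c..c+d}. K c d t * e)"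
  proof (rule set_integral_mono[OF i4 i3])
    fix t assume "t \<in> {c..c+d}"
    then have "K c d t * (u t - y) \<le> K c d t * e"
      using e[of t] K_nonneg[OF d, of c t] by (intro mult_left_mono) (auto simp: abs_le_iff)
    then show "K c d t * u t - K c d t * y \<le> K c d t * e" by (simp add: algebra_simps)
  qed
  moreover have "- (LBINT t:{c..c+d}. K c d t * e) \<le> (LBINT t:{c..c+d}. K c d t * u t - K c d t * y)"
  proof -
    have "(LBINT t:{c..c+d}. - (K c d t * e)) \<le> (LBINT t:{c..c+d}. K c d t * u t - K c d t * y)"
    proof (rule set_integral_mono[OF _ i4])
      have "set_integrable lborel {c..c+d} (\<lambda>t. K c d t * (-e))"
        by (rule K_integrable[OF d]) simp
      then show "set_integrable lborel {c..c+d} (\<lambda>t. - (K c d t * e))" by simp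
      fix t assume "t \<in> {c..c+d}"
      then have "K c d t * (- e) \<le> K c d t * (u t - y)"
        using e[of t] K_nonneg[OF d, of c t] by (intro mult_left_mono) (auto simp: abs_le_iff)
      then show "- (K c d t * e) \<le> K c d t * u t - K c d t * y" by (simp add: algebra_simps)
    qed
    then show ?thesis by (simp add: set_integral_uminus[OF i3])
  qed
  moreover have "(LBINT t:{c..c+d}. K c d t * e) = e" using K_int[OF d, of c] by simp
  ultimately show ?thesis unfolding eq by (metis abs_le_iff minus_le_iff)
qed

lemma K_restrict:
  assumes d: "d > 0" and "-1 < c" "c + d < 1"
  shows "(LBINT t:{-1<..<1}. K c d t * u t) = (LBINT t:{c..c+d}. K c d t * u t)"
  unfolding set_lebesgue_integral_def
proof (rule Bochner_Integration.integral_cong[OF refl])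
  fix t
  show "indicator {-1<..<1} t *\<^sub>R (K c d t * u t) = indicator {c..c + d} t *\<^sub>R (K c d t * u t)"
    using assms K_zero[OF d, of t c] by (cases "t \<le> c \<or> c + d \<le> t") (auto split: split_indicator)
qed

lemma kernel_conv:
  fixes u :: "real \<Rightarrow> real"
  assumes cu: "continuous_on {-1..1} u" and x0: "-1 < x0" "x0 < 1"
    and d: "\<And>n. 0 < d n" "d \<longlonglongrightarrow> 0"
    and c: "\<And>n. c n \<le> x0" "\<And>n. x0 \<le> c n + d n" "\<And>n. -1 < c n" "\<And>n. c n + d n < 1"
  shows "(\<lambda>n. LBINT t:{-1<..<1}. K (c n) (d n) t * u t) \<longlonglongrightarrow> u x0"
proof (rule LIMSEQ_I)
  fix r :: real assume r: "0 < r"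
  from cu x0 obtain \<delta> where \<delta>: "\<delta> > 0" "\<And>t. t \<in> {-1..1} \<Longrightarrow> dist t x0 < \<delta> \<Longrightarrow> dist (u t) (u x0) < r/2"
    unfolding continuous_on_iff using r by (metis atLeastAtMost_iff half_gt_zero less_eq_real_def)
  from d(2) \<delta>(1) obtain N where N: "\<And>n. n \<ge> N \<Longrightarrow> norm (d n - 0) < \<delta>"
    by (meson LIMSEQ_D)
  show "\<exists>no. \<forall>n\<ge>no. norm ((LBINT t:{-1<..<1}. K (c n) (d n) t * u t) - u x0) < r"
  proof (intro exI allI impI)
    fix n assume n: "n \<ge> N"
    have sub: "{c n..c n + d n} \<subseteq> {-1..1}" using c(3,4)[of n] by auto
    have "\<bar>(LBINT t:{c n..c n + d n}. K (c n) (d n) t * u t) - u x0\<bar> \<le> r/2"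
    proof (rule K_err[OF d(1)])
      show "continuous_on {c n..c n + d n} u" using cu sub by (rule continuous_on_subset)
      fix t assume t: "t \<in> {c n..c n + d n}"
      have "dist t x0 < \<delta>" using N[OF n] d(1)[of n] t c(1,2)[of n] by (auto simp: dist_real_def)
      then show "\<bar>u t - u x0\<bar> \<le> r/2" using \<delta>(2)[of t] t sub by (auto simp: dist_real_def)
    qed
    then show "norm ((LBINT t:{-1<..<1}. K (c n) (d n) t * u t) - u x0) < r"
      using K_restrict[OF d(1) c(3) c(4)] r by simp
  qed
qed

lemma tr_lim:
  assumes "p \<le> q" and that: "\<And>n. 0 < d n" "d \<longlonglongrightarrow> 0"
  shows "(\<lambda>n. tr p q (d n) t) \<longlonglongrightarrow> indicator {p..q} t"
proof (cases "t \<in> {p..q}")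
  case True
  then show ?thesis using tr_one[OF that(1)] by simp
next
  case False
  then have "t < p \<or> q < t" by auto
  then have pos: "0 < max (p - t) (t - q)" by auto
  from that(2) pos obtain N where N: "\<And>n. n \<ge> N \<Longrightarrow> norm (d n - 0) < max (p - t) (t - q)"
    by (meson LIMSEQ_D)
  have "eventually (\<lambda>n. tr p q (d n) t = indicator {p..q} t) sequentially"
    unfolding eventually_sequentially
  proof (intro exI allI impI)
    fix n assume "n \<ge> N"
    then have "\<bar>d n\<bar> < max (p - t) (t - q)" using N by simp
    then have "d n < max (p - t) (t - q)" using that(1)[of n] by simp
    then have "t \<le> p - d n \<or> q + d n \<le> t" using \<open>t < p \<or> q < t\<close> assms(1) by (auto simp: max_def split: if_splits)
    then show "tr p q (d n) t = indicator {p..q} t" using tr_zero[OF that(1) assms(1)] False by simp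
  qed
  then show ?thesis using tendsto_const Lim_transform_eventually eventually_mono by (smt (verit, ccfv_SIG))
qed

lemma K_integrable2:
  assumes d: "d > 0" and c: "-1 < c" "c + d < 1" and cu: "continuous_on {-1..1} u"
  shows "set_integrable lborel {-1<..<1} (\<lambda>t. K c d t * u t)"
proof -
  have "set_integrable lborel {c..c+d} (\<lambda>t. K c d t * u t)"
    using K_integrable[OF d continuous_on_subset[OF cu]] c by auto
  moreover have "(\<lambda>t. indicator {-1<..<1} t *\<^sub>R (K c d t * u t)) = (\<lambda>t. indicator {c..c+d} t *\<^sub>R (K c d t * u t))"
  proof
    fix t
    show "indicator {-1<..<1} t *\<^sub>R (K c d t * u t) = indicator {c..c + d} t *\<^sub>R (K c d t * u t)"
      using c K_zero[OF d, of t c] by (cases "t \<le> c \<or> c + d \<le> t") (auto split: split_indicator)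
  qed
  ultimately show ?thesis unfolding set_integrable_def by simp
qed

lemma tr_cont: "d > 0 \<Longrightarrow> continuous_on S (tr p q d)"
  by (rule continuous_at_imp_continuous_on) (meson DERIV_isCont tr_deriv)

lemma ftc_rat:
  fixes u w :: "real \<Rightarrow> real"
  assumes cu: "continuous_on {-1..1} u"
    and wi: "set_integrable lborel {-1<..<1} w"
    and weak: "\<And>p q d. p \<in> \<rat> \<Longrightarrow> q \<in> \<rat> \<Longrightarrow> d \<in> \<rat> \<Longrightarrow> 0 < d \<Longrightarrow> p \<le> q \<Longrightarrow> -1 < p - d \<Longrightarrow> q + d < 1 \<Longrightarrow>
        (LBINT t:{-1<..<1}. dtr p q d t * u t) = - (LBINT t:{-1<..<1}. tr p q d t * w t)"
    and pq: "p \<in> \<rat>" "q \<in> \<rat>" "-1 < p" "p \<le> q" "q < 1"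
  shows "u q - u p = (LBINT t:{p..q}. w t)"
proof -
  have "0 < min (p+1) (1-q)" using pq by auto
  then obtain N :: nat where N: "inverse (real (Suc N)) < min (p+1) (1-q)"
    using reals_Archimedean by blast
  define d where "d n = inverse (real (Suc (n + N)))" for n
  have dpos: "0 < d n" for n unfolding d_def by simp
  have dle: "d n \<le> inverse (real (Suc N))" for n unfolding d_def
    by (intro le_imp_inverse_le) auto
  have dlim: "d \<longlonglongrightarrow> 0" unfolding d_def
    using LIMSEQ_ignore_initial_segment[OF LIMSEQ_inverse_real_of_nat, of N] by simp
  have drat: "d n \<in> \<rat>" for n unfolding d_def by simp
  have c1: "-1 < p - d n" "p + d n < 1" "q + d n < 1" for n using dle[of n] N pq by auto
  have eq: "(LBINT t:{-1<..<1}. K (p - d n) (d n) t * u t) - (LBINT t:{-1<..<1}. K q (d n) t * u t)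
        = - (LBINT t:{-1<..<1}. tr p q (d n) t * w t)" for n
  proof -
    have "(LBINT t:{-1<..<1}. K (p - d n) (d n) t * u t) - (LBINT t:{-1<..<1}. K q (d n) t * u t)
        = (LBINT t:{-1<..<1}. K (p - d n) (d n) t * u t - K q (d n) t * u t)"
      by (rule set_integral_diff(2)[symmetric]; rule K_integrable2[OF dpos _ _ cu]) (use c1[of n] pq in auto)
    also have "\<dots> = (LBINT t:{-1<..<1}. dtr p q (d n) t * u t)"
      by (simp add: dtr_def algebra_simps)
    also have "\<dots> = - (LBINT t:{-1<..<1}. tr p q (d n) t * w t)"
      by (rule weak) (use pq drat dpos c1 in auto)
    finally show ?thesis .
  qed
  have L: "(\<lambda>n. (LBINT t:{-1<..<1}. K (p - d n) (d n) t * u t) - (LBINT t:{-1<..<1}. K q (d n) t * u t))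
      \<longlonglongrightarrow> u p - u q"
  proof (rule tendsto_diff)
    show "(\<lambda>n. LBINT t:{-1<..<1}. K (p - d n) (d n) t * u t) \<longlonglongrightarrow> u p"
      by (rule kernel_conv[OF cu _ _ dpos dlim]) (use pq c1 dpos in \<open>auto simp: less_imp_le\<close>)
    show "(\<lambda>n. LBINT t:{-1<..<1}. K q (d n) t * u t) \<longlonglongrightarrow> u q"
      by (rule kernel_conv[OF cu _ _ dpos dlim]) (use pq c1 dpos in \<open>auto simp: less_imp_le\<close>)
  qed
  have wm: "(\<lambda>t. indicator {-1<..<1} t *\<^sub>R w t) \<in> borel_measurable lborel"
    using wi unfolding set_integrable_def by (rule borel_measurable_integrable)
  have R: "(\<lambda>n. LBINT t:{-1<..<1}. tr p q (d n) t * w t) \<longlonglongrightarrow> (LBINT t:{p..q}. w t)"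
    unfolding set_lebesgue_integral_def
  proof (rule integral_dominated_convergence[where w="\<lambda>t. norm (indicator {-1<..<1} t *\<^sub>R w t)"])
    have trm: "tr p q (d n) \<in> borel_measurable lborel" for n
      using tr_cont[OF dpos, of UNIV] by (simp add: borel_measurable_continuous_onI)
    have "(\<lambda>t. indicator {p..q} t * (indicator {-1<..<1} t *\<^sub>R w t)) \<in> borel_measurable lborel"
      using wm by measurable
    moreover have "(\<lambda>t. indicator {p..q} t * (indicator {-1<..<1} t *\<^sub>R w t)) = (\<lambda>t. indicator {p..q} t *\<^sub>R w t)"
      using pq by (auto split: split_indicator)
    ultimately show "(\<lambda>t. indicator {p..q} t *\<^sub>R w t) \<in> borel_measurable lborel" by simp
    show "(\<lambda>t. indicator {-1<..<1} t *\<^sub>R (tr p q (d n) t * w t)) \<in> borel_measurable lborel" for n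
    proof -
      have "(\<lambda>t. tr p q (d n) t * (indicator {-1<..<1} t *\<^sub>R w t)) \<in> borel_measurable lborel"
        using trm wm by measurable
      then show ?thesis by (simp add: algebra_simps)
    qed
    show "integrable lborel (\<lambda>t. norm (indicator {-1<..<1} t *\<^sub>R w t))"
      using wi unfolding set_integrable_def by simp
    show "AE t in lborel. (\<lambda>n. indicator {-1<..<1} t *\<^sub>R (tr p q (d n) t * w t)) \<longlonglongrightarrow> indicator {p..q} t *\<^sub>R w t"
    proof (intro AE_I2)
      fix t
      have "(\<lambda>n. indicator {-1<..<1} t * (tr p q (d n) t * w t)) \<longlonglongrightarrow> indicator {-1<..<1} t * (indicator {p..q} t * w t)"
        by (intro tendsto_intros tr_lim[OF pq(4) dpos dlim])
      moreover have "indicator {-1<..<1} t * (indicator {p..q} t * w t) = indicator {p..q} t * w t"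
        using pq by (auto split: split_indicator)
      ultimately show "(\<lambda>n. indicator {-1<..<1} t *\<^sub>R (tr p q (d n) t * w t)) \<longlonglongrightarrow> indicator {p..q} t *\<^sub>R w t"
        by simp
    qed
    show "AE t in lborel. norm (indicator {-1<..<1} t *\<^sub>R (tr p q (d n) t * w t)) \<le> norm (indicator {-1<..<1} t *\<^sub>R w t)" for n
    proof (intro AE_I2)
      fix t
      have "\<bar>tr p q (d n) t\<bar> \<le> 1" using tr_bounds[OF dpos pq(4)] by (simp add: abs_le_iff)
      then show "norm (indicator {-1<..<1} t *\<^sub>R (tr p q (d n) t * w t)) \<le> norm (indicator {-1<..<1} t *\<^sub>R w t)"
        by (auto simp: abs_mult split: split_indicator intro: mult_left_le_one_le)
    qed
  qed
  have "u p - u q = - (LBINT t:{p..q}. w t)"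
  proof -
    have "(\<lambda>n. (LBINT t:{-1<..<1}. K (p - d n) (d n) t * u t) - (LBINT t:{-1<..<1}. K q (d n) t * u t))
      \<longlonglongrightarrow> - (LBINT t:{p..q}. w t)"
      unfolding eq by (rule tendsto_minus[OF R])
    then show ?thesis using LIMSEQ_unique[OF L] by blast
  qed
  then show ?thesis by simp
qed

lemma set_int_nonneg:
  fixes f :: "_ \<Rightarrow> real"
  shows "(\<And>x. x \<in> A \<Longrightarrow> 0 \<le> f x) \<Longrightarrow> 0 \<le> (LINT x:A|M. f x)"
  unfolding set_lebesgue_integral_def
  by (rule Bochner_Integration.integral_nonneg) (auto split: split_indicator)

lemma cs_ineq:
  fixes w :: "real \<Rightarrow> real"
  assumes ab: "a \<le> b" and w1: "set_integrable lborel {a..b} w" and w2: "set_integrable lborel {a..b} (\<lambda>t. (w t)^2)"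
  shows "(LBINT t:{a..b}. w t)^2 \<le> (b - a) * (LBINT t:{a..b}. (w t)^2)"
proof (cases "a = b")
  case True
  have "(LBINT t:{a..b}. w t) = 0"
    unfolding set_lebesgue_integral_def
  proof (rule integral_eq_zero_AE)
    show "AE t in lborel. indicator {a..b} t *\<^sub>R w t = 0"
      using AE_lborel_singleton[of a]
    proof (rule eventually_mono)
      fix t :: real assume "t \<noteq> a" then show "indicator {a..b} t *\<^sub>R w t = 0"
        using True by (auto split: split_indicator)
    qed
  qed
  then show ?thesis using True by simp
next
  case False
  then have ab': "a < b" using ab by simp
  define W1 where "W1 = (LBINT t:{a..b}. w t)"
  define W2 where "W2 = (LBINT t:{a..b}. (w t)^2)"
  define l where "l = W1 / (b - a)"
  have ic: "set_integrable lborel {a..b} (\<lambda>_. c)" for c :: real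
    by (rule borel_integrable_atLeastAtMost') simp
  have ic2: "(LBINT t:{a..b}. c) = (b - a) * c" for c :: real
    using ab by (simp add: set_integral_const measure_def)
  have i2: "set_integrable lborel {a..b} (\<lambda>t. 2 * l * w t)" using w1 by simp
  have "0 \<le> (LBINT t:{a..b}. (w t - l)^2)" by (rule set_int_nonneg) simp
  also have "(LBINT t:{a..b}. (w t - l)^2) = (LBINT t:{a..b}. ((w t)^2 - 2 * l * w t) + l^2)"
    by (simp add: power2_eq_square algebra_simps)
  also have "\<dots> = (LBINT t:{a..b}. (w t)^2 - 2 * l * w t) + (LBINT t:{a..b}. l^2)"
    by (rule set_integral_add(2)) (use w2 i2 ic in auto)
  also have "(LBINT t:{a..b}. (w t)^2 - 2 * l * w t) = W2 - 2 * l * W1"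
    unfolding W1_def W2_def by (subst set_integral_diff(2)[OF w2 i2]) simp
  finally have "0 \<le> W2 - 2 * l * W1 + (b - a) * l^2" by (simp add: ic2)
  also have "W2 - 2 * l * W1 + (b - a) * l^2 = W2 - W1^2 / (b - a)"
  proof -
    have gen: "W2 - 2 * (W1 / D) * W1 + D * (W1 / D)^2 = W2 - W1^2 / D" if "D > 0" for D :: real
      using that by (simp add: field_simps power2_eq_square)
    show ?thesis unfolding l_def by (rule gen) (use ab' in simp)
  qed
  finally have "W1^2 / (b - a) \<le> W2" by simp
  then show ?thesis using ab' by (simp add: W1_def W2_def field_simps)
qed

lemma set_int_mono_set:
  fixes f :: "real \<Rightarrow> real"
  assumes "set_integrable lborel B f" "set_integrable lborel A f" "A \<in> sets lborel" "B \<in> sets lborel" "\<And>x. x \<in> B \<Longrightarrow> 0 \<le> f x"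
    and "AE x in lborel. x \<in> A \<longrightarrow> x \<in> B"
  shows "(LBINT x:A. f x) \<le> (LBINT x:B. f x)"
proof -
  have Am: "A \<in> sets lborel" by fact
  have iA: "set_integrable lborel (A \<inter> B) f" by (rule set_integrable_subset[OF assms(1)]) (use assms Am in auto)
  have "(LBINT x:A. f x) = (LBINT x:A \<inter> B. f x)"
    unfolding set_lebesgue_integral_def
    by (rule integral_cong_AE) (use assms(6) iA[unfolded set_integrable_def] assms(2)[unfolded set_integrable_def] in \<open>auto split: split_indicator elim!: eventually_mono\<close>)
  also have "\<dots> \<le> (LBINT x:B. f x)"
    unfolding set_lebesgue_integral_def
    by (rule integral_mono) (use assms iA in \<open>auto simp: set_integrable_def split: split_indicator\<close>)
  finally show ?thesis .
qed

lemma dense_le: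
  fixes g :: "real \<Rightarrow> real"
  assumes ab: "a < b" and cg: "continuous_on {a..b} g" and r: "\<And>r. r \<in> \<rat> \<Longrightarrow> a < r \<Longrightarrow> r < b \<Longrightarrow> g r \<le> M"
    and x: "x \<in> {a..b}"
  shows "g x \<le> M"
proof (rule ccontr)
  assume "\<not> g x \<le> M"
  then have gx: "g x - M > 0" by simp
  from cg x gx obtain \<delta> where \<delta>: "\<delta> > 0" "\<And>t. t \<in> {a..b} \<Longrightarrow> dist t x < \<delta> \<Longrightarrow> dist (g t) (g x) < g x - M"
    unfolding continuous_on_iff by metis
  have "max a (x - \<delta>) < min b (x + \<delta>)" using ab x \<delta>(1) by auto
  then obtain r where r1: "r \<in> \<rat>" "max a (x - \<delta>) < r" "r < min b (x + \<delta>)"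
    using Rats_dense_in_real by blast
  then have "dist (g r) (g x) < g x - M" using \<delta>(2)[of r] by (auto simp: dist_real_def)
  moreover have "g r \<le> M" using r r1 by auto
  ultimately show False by (auto simp: dist_real_def)
qed

lemma slice_bounds:
  fixes u w :: "real \<Rightarrow> real"
  assumes cu: "continuous_on {-1..1} u"
    and wm: "set_borel_measurable lborel {-1<..<1} w"
    and w2: "set_integrable lborel {-1<..<1} (\<lambda>t. (w t)^2)"
    and weak: "\<And>p q d. p \<in> \<rat> \<Longrightarrow> q \<in> \<rat> \<Longrightarrow> d \<in> \<rat> \<Longrightarrow> 0 < d \<Longrightarrow> p \<le> q \<Longrightarrow> -1 < p - d \<Longrightarrow> q + d < 1 \<Longrightarrow>
        (LBINT t:{-1<..<1}. dtr p q d t * u t) = - (LBINT t:{-1<..<1}. tr p q d t * w t)"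
    and u0: "u (-1) = 0" "u 1 = 0"
  shows "\<And>x. x \<in> {-1..1} \<Longrightarrow> (u x)^2 \<le> 2 * (LBINT t:{-1<..<1}. (w t)^2)"
    and "2 * (u 0)^2 \<le> (LBINT t:{-1<..<1}. (w t)^2)"
proof -
  define I where "I = (LBINT t:{-1<..<1}. (w t)^2)"
  have ic: "set_integrable lborel {-1<..<1::real} (\<lambda>_. 1::real)"
  proof -
    have "set_integrable lborel {-1..1::real} (\<lambda>_. 1::real)"
      by (rule borel_integrable_atLeastAtMost') simp
    then show ?thesis by (rule set_integrable_subset) auto
  qed
  have wi: "set_integrable lborel {-1<..<1} w"
  proof (rule set_integrable_bound[OF _ wm])
    show "set_integrable lborel {-1<..<1} (\<lambda>t. 1 + (w t)^2)" using ic w2 by (rule set_integral_add(1))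
    show "AE x in lborel. x \<in> {-1<..<1} \<longrightarrow> norm (w x) \<le> norm (1 + (w x)^2)"
    proof (intro AE_I2 impI)
      fix x
      have "\<bar>w x\<bar> \<le> 1 + (w x)^2"
        using zero_le_power2[of "\<bar>w x\<bar> - 1/2"] by (simp add: power2_eq_square algebra_simps)
      then show "norm (w x) \<le> norm (1 + (w x)^2)" by simp
    qed
  qed
  have ftc: "u q - u p = (LBINT t:{p..q}. w t)" if "p \<in> \<rat>" "q \<in> \<rat>" "-1 < p" "p \<le> q" "q < 1" for p q
    by (rule ftc_rat[OF cu wi weak]) (use that in auto)
  have sub: "set_integrable lborel {p..q} f" if "set_integrable lborel {-1<..<1} f" "-1 < p" "q < 1" for f :: "real \<Rightarrow> real" and p q
    by (rule set_integrable_subset[OF that(1)]) (use that in auto)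
  have est: "(u q - u p)^2 \<le> (q - p) * (LBINT t:{p..q}. (w t)^2)"
    if "p \<in> \<rat>" "q \<in> \<rat>" "-1 < p" "p \<le> q" "q < 1" for p q
    unfolding ftc[OF that] by (rule cs_ineq) (use that sub[OF wi] sub[OF w2] in auto)
  have Ipos: "0 \<le> I" unfolding I_def by (rule set_int_nonneg) simp
  have sub_le: "(LBINT t:{p..q}. (w t)^2) \<le> I" if "-1 < p" "q < 1" for p q
    unfolding I_def by (rule set_int_mono_set[OF w2]) (use that in \<open>auto intro: sub[OF w2]\<close>)
  have pq_le: "(u q - u p)^2 \<le> 2 * I" if "p \<in> \<rat>" "q \<in> \<rat>" "-1 < p" "p < 1" "-1 < q" "q < 1" for p q
  proof -
    have *: "(u q - u p)^2 \<le> 2 * I" if "p \<in> \<rat>" "q \<in> \<rat>" "-1 < p" "p \<le> q" "q < 1" for p q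
    proof -
      have "(u q - u p)^2 \<le> (q - p) * (LBINT t:{p..q}. (w t)^2)" by (rule est[OF that])
      also have "\<dots> \<le> 2 * I"
        by (rule mult_mono) (use that sub_le[of p q] Ipos in \<open>auto intro: set_int_nonneg\<close>)
      finally show ?thesis .
    qed
    show ?thesis
    proof (cases "p \<le> q")
      case True then show ?thesis using * that by auto
    next
      case False
      then have "(u p - u q)^2 \<le> 2 * I" using * that by auto
      then show ?thesis by (simp add: power2_commute)
    qed
  qed
  have rat_le: "(u q)^2 \<le> 2 * I" if "q \<in> \<rat>" "-1 < q" "q < 1" for q
  proof -
    have "(\<lambda>x. (u q - u x)^2) (-1) \<le> 2 * I"
      by (rule dense_le[of "-1" 1]) (use that pq_le in \<open>auto intro!: continuous_intros cu\<close>)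
    then show ?thesis using u0 by simp
  qed
  show "\<And>x. x \<in> {-1..1} \<Longrightarrow> (u x)^2 \<le> 2 * (LBINT t:{-1<..<1}. (w t)^2)"
    unfolding I_def[symmetric]
    by (rule dense_le[of "-1" 1, where g="\<lambda>x. (u x)^2"]) (use rat_le in \<open>auto intro!: continuous_intros cu\<close>)
  define J1 where "J1 = (LBINT t:{-1<..0}. (w t)^2)"
  define J2 where "J2 = (LBINT t:{0<..<1}. (w t)^2)"
  have "I = J1 + J2"
  proof -
    have "{-1<..<1} = {-1<..0} \<union> {0<..<(1::real)}" by auto
    then have "I = (LBINT t:{-1<..0} \<union> {0<..<1}. (w t)^2)" unfolding I_def by simp
    also have "\<dots> = J1 + J2" unfolding J1_def J2_def
      by (rule set_integral_Un) (auto intro: set_integrable_subset[OF w2])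
    finally show ?thesis .
  qed
  have "(u 0)^2 \<le> J1"
  proof -
    have "(\<lambda>x. (u 0 - u x)^2) (-1) \<le> J1"
    proof (rule dense_le[of "-1" 0, where g="\<lambda>x. (u 0 - u x)^2"])
      show "continuous_on {- 1..0} (\<lambda>x. (u 0 - u x)^2)"
        by (intro continuous_intros continuous_on_subset[OF cu]) auto
      fix r :: real assume r: "r \<in> \<rat>" "-1 < r" "r < 0"
      have "(u 0 - u r)^2 \<le> (0 - r) * (LBINT t:{r..0}. (w t)^2)" by (rule est) (use r in auto)
      also have "\<dots> \<le> 1 * J1"
      proof (rule mult_mono)
        show "(LBINT t:{r..0}. (w t)^2) \<le> J1" unfolding J1_def
          by (rule set_int_mono_set) (use r in \<open>auto intro: set_integrable_subset[OF w2]\<close>)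
        show "0 \<le> (LBINT t:{r..0}. (w t)^2)" by (rule set_int_nonneg) simp
      qed (use r in auto)
      finally show "(\<lambda>x. (u 0 - u x)^2) r \<le> J1" by simp
    qed auto
    then show ?thesis using u0 by simp
  qed
  moreover have "(u 0)^2 \<le> J2"
  proof -
    have "(\<lambda>x. (u x - u 0)^2) 1 \<le> J2"
    proof (rule dense_le[of 0 1, where g="\<lambda>x. (u x - u 0)^2"])
      show "continuous_on {0..1} (\<lambda>x. (u x - u 0)^2)"
        by (intro continuous_intros continuous_on_subset[OF cu]) auto
      fix r :: real assume r: "r \<in> \<rat>" "0 < r" "r < 1"
      have "(u r - u 0)^2 \<le> (r - 0) * (LBINT t:{0..r}. (w t)^2)" by (rule est) (use r in auto)
      also have "\<dots> \<le> 1 * J2"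
      proof (rule mult_mono)
        show "(LBINT t:{0..r}. (w t)^2) \<le> J2" unfolding J2_def
        proof (rule set_int_mono_set)
          show "AE x in lborel. x \<in> {0..r} \<longrightarrow> x \<in> {0<..<1}"
            using AE_lborel_singleton[of 0] by eventually_elim (use r in auto)
        qed (use r in \<open>auto intro: set_integrable_subset[OF w2]\<close>)
        show "0 \<le> (LBINT t:{0..r}. (w t)^2)" by (rule set_int_nonneg) simp
      qed (use r in auto)
      finally show "(\<lambda>x. (u x - u 0)^2) r \<le> J2" by simp
    qed auto
    then show ?thesis using u0 by simp
  qed
  ultimately show "2 * (u 0)^2 \<le> (LBINT t:{-1<..<1}. (w t)^2)"
    using \<open>I = J1 + J2\<close> unfolding I_def by simp
qed

lemma tr_test_int:
  assumes "0 < d" "p \<le> q" "-1 < p - d" "q + d < 1"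
  shows "test_fun_int (tr p q d) (dtr p q d)"
  unfolding test_fun_int_def
  using tr_deriv[OF assms(1)] dtr_cont[OF assms(1)] tr_compact[OF assms(1,2)] tr_support[OF assms(1,2)] assms(3,4)
  by auto

lemma H01_bound:
  assumes "H01_int \<psi> d\<psi>"
  shows "2 * (\<psi> 0)^2 \<le> (LBINT t:{-1<..<1}. (d\<psi> t)^2)"
proof (rule slice_bounds(2))
  show "continuous_on {-1..1} \<psi>" "set_borel_measurable lborel {-1<..<1} d\<psi>"
    "set_integrable lborel {-1<..<1} (\<lambda>t. (d\<psi> t)^2)" "\<psi> (-1) = 0" "\<psi> 1 = 0"
    using assms unfolding H01_int_def by auto
  fix p q d :: real assume "p \<in> \<rat>" "q \<in> \<rat>" "d \<in> \<rat>" "0 < d" "p \<le> q" "-1 < p - d" "q + d < 1"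
  then have "test_fun_int (tr p q d) (dtr p q d)" by (intro tr_test_int) auto
  then show "(LBINT t:{-1<..<1}. dtr p q d t * \<psi> t) = - (LBINT t:{-1<..<1}. tr p q d t * d\<psi> t)"
    using assms unfolding H01_int_def by blast
qed

lemma ae_set_eq:
  fixes f :: "real \<Rightarrow> real"
  assumes "continuous_on UNIV f" "A \<in> sets borel" "B \<in> sets borel" "AE x in lborel. x \<in> A \<longleftrightarrow> x \<in> B"
  shows "(LBINT x:A. f x) = (LBINT x:B. f x)"
proof (rule set_integral_cong_set)
  have "f \<in> borel_measurable borel" using assms(1) by (rule borel_measurable_continuous_onI)
  then show "set_borel_measurable lborel A f" "set_borel_measurable lborel B f"
    unfolding set_borel_measurable_def using assms(2,3) by measurable
  show "AE x in lborel. ((x::real) \<in> B) = (x \<in> A)" using assms(4) by eventually_elim auto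
qed

lemma cont_int:
  fixes f :: "real \<Rightarrow> real"
  assumes "continuous_on UNIV f" "A \<subseteq> {a..b}" "A \<in> sets borel"
  shows "set_integrable lborel A f"
  by (rule set_integrable_subset[OF borel_integrable_atLeastAtMost'[OF continuous_on_subset[OF assms(1)]]])
     (use assms in auto)

lemma split_int:
  fixes f :: "real \<Rightarrow> real"
  assumes cf: "continuous_on UNIV f"
  shows "(LBINT t:{-1<..<1}. f t) = (LBINT t:{-1..0}. f t) + (LBINT t:{0..1}. f t)"
proof -
  have "{-1<..<1} = {-1<..0} \<union> {0<..<(1::real)}" by auto
  then have "(LBINT t:{-1<..<1}. f t) = (LBINT t:{-1<..0} \<union> {0<..<1}. f t)" by simp
  also have "\<dots> = (LBINT t:{-1<..0}. f t) + (LBINT t:{0<..<1}. f t)"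
  proof (rule set_integral_Un)
    show "set_integrable lborel {-1<..0} f" by (rule cont_int[OF cf, of _ "-1" 1]) auto
    show "set_integrable lborel {0<..<1} f" by (rule cont_int[OF cf, of _ "-1" 1]) auto
  qed auto
  also have "(LBINT t:{-1<..0}. f t) = (LBINT t:{-1..0}. f t)"
  proof (rule ae_set_eq[OF cf])
    show "AE x in lborel. ((x::real) \<in> {-1<..0}) = (x \<in> {-1..0})"
      using AE_lborel_singleton[of "-1"] by eventually_elim auto
  qed auto
  also have "(LBINT t:{0<..<1}. f t) = (LBINT t:{0..1}. f t)"
  proof (rule ae_set_eq[OF cf])
    show "AE x in lborel. ((x::real) \<in> {0<..<1}) = (x \<in> {0..1})"
      using AE_lborel_singleton[of 0] AE_lborel_singleton[of 1] by eventually_elim auto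
  qed auto
  finally show ?thesis .
qed

definition tent :: "real \<Rightarrow> real" where "tent t = 1 - \<bar>t\<bar>"
definition dtent :: "real \<Rightarrow> real" where "dtent t = (if t \<le> 0 then 1 else -1)"

lemma test_zero_ends:
  assumes "test_fun_int \<phi> \<phi>'"
  shows "\<phi> (-1) = 0" "\<phi> 1 = 0"
proof -
  have "closure {x. \<phi> x \<noteq> 0} \<subseteq> {-1<..<1}" using assms unfolding test_fun_int_def by (elim conjE)
  then have "{x. \<phi> x \<noteq> 0} \<subseteq> {-1<..<1}" using closure_subset[of "{x. \<phi> x \<noteq> 0}"] by (rule order_trans[rotated])
  then show "\<phi> (-1) = 0" "\<phi> 1 = 0" by auto
qed

lemma tent_weak:
  assumes tf: "test_fun_int \<phi> \<phi>'"
  shows "(LBINT t:{-1<..<1}. \<phi>' t * tent t) = - (LBINT t:{-1<..<1}. \<phi> t * dtent t)"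
proof -
  have der: "\<And>x. (\<phi> has_real_derivative \<phi>' x) (at x)" and c': "continuous_on UNIV \<phi>'"
    using tf unfolding test_fun_int_def by auto
  have c: "continuous_on UNIV \<phi>"
    by (rule continuous_at_imp_continuous_on) (meson DERIV_isCont der)
  have z: "\<phi> (-1) = 0" "\<phi> 1 = 0" using test_zero_ends[OF tf] by auto
  have ct: "continuous_on UNIV tent" unfolding tent_def[abs_def] by (intro continuous_intros)
  have F1: "(LBINT t:{-1..0}. \<phi>' t * (1 + t) + \<phi> t) = \<phi> 0"
  proof -
    have "(LBINT t:{-1..0}. \<phi>' t * (1 + t) + \<phi> t) = \<phi> 0 * (1 + 0) - \<phi> (-1) * (1 + -1)"
      unfolding set_lebesgue_integral_def
    proof (rule integral_FTC_atLeastAtMost[where F="\<lambda>t. \<phi> t * (1 + t)"])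
      fix x :: real
      have "((\<lambda>t. \<phi> t * (1 + t)) has_real_derivative (\<phi>' x * (1 + x) + \<phi> x)) (at x)"
        using DERIV_mult[OF der[of x] DERIV_add[OF DERIV_const[of 1] DERIV_ident]] by simp
      then show "((\<lambda>t. \<phi> t * (1 + t)) has_vector_derivative (\<phi>' x * (1 + x) + \<phi> x)) (at x within {-1..0})"
        by (simp add: has_real_derivative_iff_has_vector_derivative[symmetric] has_field_derivative_at_within)
    next
      show "continuous_on {-1..0} (\<lambda>t. \<phi>' t * (1 + t) + \<phi> t)"
        by (intro continuous_intros continuous_on_subset[OF c] continuous_on_subset[OF c']) auto
    qed simp
    then show ?thesis by simp
  qed
  have F2: "(LBINT t:{0..1}. \<phi>' t * (1 - t) - \<phi> t) = - \<phi> 0"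
  proof -
    have "(LBINT t:{0..1}. \<phi>' t * (1 - t) - \<phi> t) = \<phi> 1 * (1 - 1) - \<phi> 0 * (1 - 0)"
      unfolding set_lebesgue_integral_def
    proof (rule integral_FTC_atLeastAtMost[where F="\<lambda>t. \<phi> t * (1 - t)"])
      fix x :: real
      have "((\<lambda>t. \<phi> t * (1 - t)) has_real_derivative (\<phi>' x * (1 - x) - \<phi> x)) (at x)"
        using DERIV_mult[OF der[of x] DERIV_diff[OF DERIV_const[of 1] DERIV_ident]] by simp
      then show "((\<lambda>t. \<phi> t * (1 - t)) has_vector_derivative (\<phi>' x * (1 - x) - \<phi> x)) (at x within {0..1})"
        by (simp add: has_real_derivative_iff_has_vector_derivative[symmetric] has_field_derivative_at_within)
    next
      show "continuous_on {0..1} (\<lambda>t. \<phi>' t * (1 - t) - \<phi> t)"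
        by (intro continuous_intros continuous_on_subset[OF c] continuous_on_subset[OF c']) auto
    qed simp
    then show ?thesis by simp
  qed
  have i1: "set_integrable lborel {-1..0} (\<lambda>t. \<phi>' t * (1 + t))"
    by (rule cont_int[of _ _ "-1" 0]) (auto intro!: continuous_intros c')
  have i2: "set_integrable lborel {-1..0} \<phi>" by (rule cont_int[OF c, of _ "-1" 0]) auto
  have i3: "set_integrable lborel {0..1} (\<lambda>t. \<phi>' t * (1 - t))"
    by (rule cont_int[of _ _ 0 1]) (auto intro!: continuous_intros c')
  have i4: "set_integrable lborel {0..1} \<phi>" by (rule cont_int[OF c, of _ 0 1]) auto
  have L1: "(LBINT t:{-1..0}. \<phi>' t * tent t) = \<phi> 0 - (LBINT t:{-1..0}. \<phi> t)"
  proof -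
    have "(LBINT t:{-1..0}. \<phi>' t * tent t) = (LBINT t:{-1..0}. \<phi>' t * (1 + t))"
      unfolding set_lebesgue_integral_def
      by (rule Bochner_Integration.integral_cong) (auto simp: tent_def split: split_indicator)
    also have "\<dots> = \<phi> 0 - (LBINT t:{-1..0}. \<phi> t)"
      using F1 set_integral_add(2)[OF i1 i2] by simp
    finally show ?thesis .
  qed
  have L2: "(LBINT t:{0..1}. \<phi>' t * tent t) = - \<phi> 0 + (LBINT t:{0..1}. \<phi> t)"
  proof -
    have "(LBINT t:{0..1}. \<phi>' t * tent t) = (LBINT t:{0..1}. \<phi>' t * (1 - t))"
      unfolding set_lebesgue_integral_def
      by (rule Bochner_Integration.integral_cong) (auto simp: tent_def split: split_indicator)
    also have "\<dots> = - \<phi> 0 + (LBINT t:{0..1}. \<phi> t)"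
      using F2 set_integral_diff(2)[OF i3 i4] by simp
    finally show ?thesis .
  qed
  have "(LBINT t:{-1<..<1}. \<phi>' t * tent t) = (LBINT t:{-1..0}. \<phi> t) * (-1) + (LBINT t:{0..1}. \<phi> t)"
    using split_int[of "\<lambda>t. \<phi>' t * tent t"] L1 L2 by (simp add: continuous_intros c' ct)
  moreover have "(LBINT t:{-1<..<1}. \<phi> t * dtent t) = (LBINT t:{-1..0}. \<phi> t) - (LBINT t:{0..1}. \<phi> t)"
  proof -
    have "{-1<..<1} = {-1<..0} \<union> {0<..<(1::real)}" by auto
    then have "(LBINT t:{-1<..<1}. \<phi> t * dtent t) = (LBINT t:{-1<..0} \<union> {0<..<1}. \<phi> t * dtent t)" by simp
    also have "\<dots> = (LBINT t:{-1<..0}. \<phi> t * dtent t) + (LBINT t:{0<..<1}. \<phi> t * dtent t)"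
    proof (rule set_integral_Un)
      have "set_integrable lborel {-1<..0} \<phi>" by (rule cont_int[OF c, of _ "-1" 0]) auto
      then show "set_integrable lborel {-1<..0} (\<lambda>t. \<phi> t * dtent t)"
        unfolding set_integrable_def
        by (rule Bochner_Integration.integrable_cong[THEN iffD1, rotated 2]) (auto simp: dtent_def split: split_indicator)
      have "set_integrable lborel {0<..<1} (\<lambda>t. - \<phi> t)" by (rule cont_int[of _ _ 0 1]) (auto intro!: continuous_intros c)
      then show "set_integrable lborel {0<..<1} (\<lambda>t. \<phi> t * dtent t)"
        unfolding set_integrable_def
        by (rule Bochner_Integration.integrable_cong[THEN iffD1, rotated 2]) (auto simp: dtent_def split: split_indicator)
    qed auto
    also have "(LBINT t:{-1<..0}. \<phi> t * dtent t) = (LBINT t:{-1<..0}. \<phi> t)"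
      unfolding set_lebesgue_integral_def
      by (rule Bochner_Integration.integral_cong) (auto simp: dtent_def split: split_indicator)
    also have "(LBINT t:{0<..<1}. \<phi> t * dtent t) = (LBINT t:{0<..<1}. - \<phi> t)"
      unfolding set_lebesgue_integral_def
      by (rule Bochner_Integration.integral_cong) (auto simp: dtent_def split: split_indicator)
    also have "(LBINT t:{-1<..0}. \<phi> t) = (LBINT t:{-1..0}. \<phi> t)"
    proof (rule ae_set_eq[OF c])
      show "AE x in lborel. ((x::real) \<in> {-1<..0}) = (x \<in> {-1..0})"
        using AE_lborel_singleton[of "-1"] by eventually_elim auto
    qed auto
    also have "(LBINT t:{0<..<1}. - \<phi> t) = (LBINT t:{0..1}. - \<phi> t)"
    proof (rule ae_set_eq)
      show "AE x in lborel. ((x::real) \<in> {0<..<1}) = (x \<in> {0..1})"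
        using AE_lborel_singleton[of 0] AE_lborel_singleton[of 1] by eventually_elim auto
      show "continuous_on UNIV (\<lambda>t. - \<phi> t)" by (intro continuous_intros c)
    qed auto
    also have "(LBINT t:{0..1}. - \<phi> t) = - (LBINT t:{0..1}. \<phi> t)"
      by (rule set_integral_uminus[OF i4])
    finally show ?thesis by simp
  qed
  ultimately show ?thesis by simp
qed

lemma tent_H01: "H01_int tent dtent"
  unfolding H01_int_def
proof (intro conjI allI impI)
  have ct: "continuous_on UNIV tent" unfolding tent_def[abs_def] by (intro continuous_intros)
  have mt: "tent \<in> borel_measurable borel" by (rule borel_measurable_continuous_onI[OF ct])
  have md: "dtent \<in> borel_measurable borel" unfolding dtent_def[abs_def] by measurable
  show "set_borel_measurable lborel {-1<..<1} tent" "set_borel_measurable lborel {-1<..<1} dtent"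
    unfolding set_borel_measurable_def using mt md by measurable
  show "set_integrable lborel {-1<..<1} (\<lambda>t. (tent t)^2)"
    by (rule cont_int[of _ _ "-1" 1]) (auto intro!: continuous_intros ct)
  have "set_integrable lborel {-1<..<1::real} (\<lambda>t. 1::real)"
    by (rule cont_int[of _ _ "-1" 1]) auto
  then show "set_integrable lborel {-1<..<1} (\<lambda>t. (dtent t)^2)"
    unfolding set_integrable_def
    by (rule Bochner_Integration.integrable_cong[THEN iffD1, rotated 2]) (auto simp: dtent_def split: split_indicator)
  show "continuous_on {-1..1} tent" using ct by (rule continuous_on_subset) auto
  show "tent (-1) = 0" "tent 1 = 0" by (auto simp: tent_def)
  fix \<phi> \<phi>' assume "test_fun_int \<phi> \<phi>'"
  then show "(LBINT t:{-1<..<1}. \<phi>' t * tent t) = - (LBINT t:{-1<..<1}. \<phi> t * dtent t)"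
    by (rule tent_weak)
qed

lemma dtent_int: "(LBINT t:{-1<..<1}. (dtent t)^2) = 2"
proof -
  have "(LBINT t:{-1<..<1}. (dtent t)^2) = (LBINT t:{-1<..<1::real}. (1::real))"
    unfolding set_lebesgue_integral_def
    by (rule Bochner_Integration.integral_cong) (auto simp: dtent_def)
  also have "\<dots> = 2" by (simp add: set_integral_const)
  finally show ?thesis .
qed

lemma Bc_sq_ge:
  assumes "g > 0" "rho > 0"
  shows "g * rho / 2 \<le> Bc_sq g rho"
proof -
  define S where "S = {g * rho * (\<psi> 0)^2 / (LINT t:{-1<..<1}|lborel. (d\<psi> t)^2) | \<psi> d\<psi>.
      H01_int \<psi> d\<psi> \<and> (\<exists>t\<in>{-1<..<1}. \<psi> t \<noteq> 0)}"
  have mem: "g * rho / 2 \<in> S"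
  proof -
    have e: "g * rho / 2 = g * rho * (tent 0)^2 / (LINT t:{-1<..<1}|lborel. (dtent t)^2)"
      using dtent_int by (simp add: tent_def)
    have "\<exists>t\<in>{-1<..<1}. tent t \<noteq> 0" by (rule bexI[of _ 0]) (auto simp: tent_def)
    then show ?thesis unfolding S_def using e tent_H01 by blast
  qed
  have bdd: "bdd_above S"
  proof (rule bdd_aboveI)
    fix x assume "x \<in> S"
    then obtain \<psi> d\<psi> where x: "x = g * rho * (\<psi> 0)^2 / (LBINT t:{-1<..<1}. (d\<psi> t)^2)" and h: "H01_int \<psi> d\<psi>"
      unfolding S_def by blast
    have b: "2 * (\<psi> 0)^2 \<le> (LBINT t:{-1<..<1}. (d\<psi> t)^2)" by (rule H01_bound[OF h])
    show "x \<le> g * rho / 2"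
    proof (cases "(LBINT t:{-1<..<1}. (d\<psi> t)^2) = 0")
      case True then show ?thesis using x assms by simp
    next
      case False
      then have pos: "(LBINT t:{-1<..<1}. (d\<psi> t)^2) > 0"
        using b by (smt (verit) zero_le_power2)
      have "g * rho * (\<psi> 0)^2 \<le> g * rho / 2 * (LBINT t:{-1<..<1}. (d\<psi> t)^2)"
        using b assms by (simp add: mult_left_mono)
      then show ?thesis using x pos by (simp add: divide_le_eq)
    qed
  qed
  show ?thesis unfolding Bc_sq_def S_def[symmetric] by (rule cSup_upper[OF mem bdd])
qed

lemma dens_eq:
  fixes h :: "real \<Rightarrow> real"
  assumes hi: "integrable lborel h" and hp: "\<And>x. 0 \<le> h x" and A: "A \<in> sets borel"
  shows "emeasure (density lborel (\<lambda>x. ennreal (h x))) A = ennreal (LBINT t:A. h t)"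
proof -
  have hm: "h \<in> borel_measurable borel" using borel_measurable_integrable[OF hi] by simp
  have "emeasure (density lborel (\<lambda>x. ennreal (h x))) A = (\<integral>\<^sup>+ t. ennreal (h t) * indicator A t \<partial>lborel)"
    by (rule emeasure_density) (use hm A in auto)
  also have "\<dots> = (\<integral>\<^sup>+ t. ennreal (indicator A t * h t) \<partial>lborel)"
    by (rule nn_integral_cong) (auto split: split_indicator)
  also have "\<dots> = ennreal (\<integral> t. indicator A t * h t \<partial>lborel)"
  proof (rule nn_integral_eq_integral)
    show "integrable lborel (\<lambda>t. indicator A t * h t)"
      using hi A by (intro integrable_mult_indicator[of A lborel h, simplified]) auto
  qed (use hp in \<open>auto split: split_indicator\<close>)
  finally show ?thesis by (simp add: set_lebesgue_integral_def)
qed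

lemma ae_zero_intervals:
  fixes G :: "real \<Rightarrow> real"
  assumes Gm: "G \<in> borel_measurable borel"
    and Gi: "\<And>a b. set_integrable lborel {a..b} G"
    and G0: "\<And>a b. a \<le> b \<Longrightarrow> (LBINT t:{a..b}. G t) = 0"
  shows "AE x in lborel. G x = 0"
proof -
  have K: "AE x in lborel. indicator {-real k..real k} x * G x = 0" for k :: nat
  proof -
    define H where "H x = indicator {-real k..real k} x * G x" for x
    have Hi: "integrable lborel H" using Gi[of "-real k" "real k"] unfolding H_def set_integrable_def by simp
    have Hint: "(LBINT t:{x<..}. H t) = 0" for x
    proof (cases "real k \<le> x")
      case True
      have "(\<lambda>t. indicator {x<..} t *\<^sub>R H t) = (\<lambda>t. 0)"
        using True by (auto simp: H_def split: split_indicator)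
      then show ?thesis unfolding set_lebesgue_integral_def by simp
    next
      case False
      have "(LBINT t:{x<..}. H t) = (LBINT t:{max x (-real k)..real k}. G t)"
        unfolding set_lebesgue_integral_def
      proof (rule integral_cong_AE)
        show "(\<lambda>t. indicator {x<..} t *\<^sub>R H t) \<in> borel_measurable lborel"
          using Hi unfolding H_def by (intro borel_measurable_integrable integrable_mult_indicator) auto
        show "(\<lambda>t. indicator {max x (-real k)..real k} t *\<^sub>R G t) \<in> borel_measurable lborel"
          using Gm by simp
        show "AE t in lborel. indicator {x<..} t *\<^sub>R H t = indicator {max x (-real k)..real k} t *\<^sub>R G t"
          using AE_lborel_singleton[of x]
        proof (rule eventually_mono)
          fix t :: real assume "t \<noteq> x"
          then show "indicator {x<..} t *\<^sub>R H t = indicator {max x (-real k)..real k} t *\<^sub>R G t"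
            using False by (auto simp: H_def split: split_indicator)
        qed
      qed
      also have "\<dots> = 0" by (rule G0) (use False in auto)
      finally show ?thesis .
    qed
    define hp where "hp x = max 0 (H x)" for x
    define hn where "hn x = max 0 (- H x)" for x
    have hpi: "integrable lborel hp" unfolding hp_def using Hi by auto
    have hni: "integrable lborel hn" unfolding hn_def using Hi by auto
    have "density lborel (\<lambda>x. ennreal (hp x)) = density lborel (\<lambda>x. ennreal (hn x))"
    proof (rule measure_eqI_lessThan)
      show "sets (density lborel (\<lambda>x. ennreal (hp x))) = sets borel" by simp
      show "sets (density lborel (\<lambda>x. ennreal (hn x))) = sets borel" by simp
      fix x :: real
      show "emeasure (density lborel (\<lambda>x. ennreal (hp x))) {x<..} < \<infinity>"
        by (subst dens_eq[OF hpi]) (auto simp: hp_def)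
      have "set_integrable lborel {x<..} hp" "set_integrable lborel {x<..} hn"
        unfolding set_integrable_def by (rule integrable_mult_indicator; simp add: hpi hni)+
      then have "(LBINT t:{x<..}. hp t) - (LBINT t:{x<..}. hn t) = (LBINT t:{x<..}. hp t - hn t)"
        by (rule set_integral_diff(2)[symmetric])
      also have "\<dots> = (LBINT t:{x<..}. H t)"
        unfolding set_lebesgue_integral_def
        by (rule Bochner_Integration.integral_cong) (auto simp: hp_def hn_def)
      finally have "(LBINT t:{x<..}. hp t) = (LBINT t:{x<..}. hn t)" using Hint[of x] by simp
      then show "emeasure (density lborel (\<lambda>x. ennreal (hp x))) {x<..} = emeasure (density lborel (\<lambda>x. ennreal (hn x))) {x<..}"
      proof -
        have e1: "emeasure (density lborel (\<lambda>x. ennreal (hp x))) {x<..} = ennreal (LBINT t:{x<..}. hp t)"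
          by (rule dens_eq[OF hpi]) (auto simp: hp_def)
        have e2: "emeasure (density lborel (\<lambda>x. ennreal (hn x))) {x<..} = ennreal (LBINT t:{x<..}. hn t)"
          by (rule dens_eq[OF hni]) (auto simp: hn_def)
        show ?thesis unfolding e1 e2 using \<open>(LBINT t:{x<..}. hp t) = (LBINT t:{x<..}. hn t)\<close> by simp
      qed
    qed
    then have "AE x in lborel. ennreal (hp x) = ennreal (hn x)"
    proof (rule sigma_finite_measure.density_unique[OF sigma_finite_lborel, rotated 2])
      show "(\<lambda>x. ennreal (hp x)) \<in> borel_measurable lborel" using borel_measurable_integrable[OF hpi] by simp
      show "(\<lambda>x. ennreal (hn x)) \<in> borel_measurable lborel" using borel_measurable_integrable[OF hni] by simp
    qed
    then show ?thesis
    proof (rule eventually_mono)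
      fix x assume "ennreal (hp x) = ennreal (hn x)"
      then have "hp x = hn x" by (simp add: hp_def hn_def)
      then have "H x = 0" unfolding hp_def hn_def by (cases "H x \<ge> 0") auto
      then show "indicator {-real k..real k} x * G x = 0" by (simp add: H_def)
    qed
  qed
  then have "AE x in lborel. \<forall>k::nat. indicator {-real k..real k} x * G x = 0"
    using K by (subst AE_all_countable) blast
  then show ?thesis
  proof (rule eventually_mono)
    fix x :: real assume a: "\<forall>k::nat. indicator {-real k..real k} x * G x = 0"
    obtain k :: nat where "\<bar>x\<bar> \<le> real k" using real_arch_simple by blast
    then have "x \<in> {-real k..real k}" by auto
    then show "G x = 0" using a[rule_format, of k] by simp
  qed
qed

lemma comp_fst_deriv:
  assumes "\<And>s. (f has_real_derivative f' s) (at s)"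
  shows "((\<lambda>x::real\<times>real. f (fst x)) has_derivative (\<lambda>h. f' (fst x) * fst h)) (at x)"
  using has_derivative_compose[OF has_derivative_fst[OF has_derivative_ident] has_field_derivative_imp_has_derivative[OF assms[of "fst x"]]]
  by simp

lemma comp_snd_deriv:
  assumes "\<And>s. (f has_real_derivative f' s) (at s)"
  shows "((\<lambda>x::real\<times>real. f (snd x)) has_derivative (\<lambda>h. f' (snd x) * snd h)) (at x)"
  using has_derivative_compose[OF has_derivative_snd[OF has_derivative_ident] has_field_derivative_imp_has_derivative[OF assms[of "snd x"]]]
  by simp

lemma cont_fst: "continuous_on UNIV f \<Longrightarrow> continuous_on UNIV (\<lambda>x::real\<times>real. f (fst x))"
  by (rule continuous_on_compose2[OF _ continuous_on_fst[OF continuous_on_id]]) auto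
lemma cont_snd: "continuous_on UNIV f \<Longrightarrow> continuous_on UNIV (\<lambda>x::real\<times>real. f (snd x))"
  by (rule continuous_on_compose2[OF _ continuous_on_snd[OF continuous_on_id]]) auto

lemma prod_test:
  assumes ab: "a \<le> b" "0 < e" and pq: "0 < d" "p \<le> q" "-1 < p - d" "q + d < 1"
  shows "test_fun_strip (\<lambda>x. tr a b e (fst x) * tr p q d (snd x))
     (\<lambda>x. dtr a b e (fst x) * tr p q d (snd x)) (\<lambda>x. tr a b e (fst x) * dtr p q d (snd x))"
  unfolding test_fun_strip_def
proof (intro conjI allI)
  fix x :: "real \<times> real"
  have d1: "((\<lambda>x::real\<times>real. tr a b e (fst x)) has_derivative (\<lambda>h. dtr a b e (fst x) * fst h)) (at x)"
    by (rule comp_fst_deriv) (rule tr_deriv[OF ab(2)])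
  have d2: "((\<lambda>x::real\<times>real. tr p q d (snd x)) has_derivative (\<lambda>h. dtr p q d (snd x) * snd h)) (at x)"
    by (rule comp_snd_deriv) (rule tr_deriv[OF pq(1)])
  show "((\<lambda>x. tr a b e (fst x) * tr p q d (snd x)) has_derivative
        (\<lambda>h. fst h * (dtr a b e (fst x) * tr p q d (snd x)) + snd h * (tr a b e (fst x) * dtr p q d (snd x)))) (at x)"
    by (rule has_derivative_eq_rhs[OF has_derivative_mult[OF d1 d2]]) (simp add: fun_eq_iff algebra_simps)
next
  have c1: "continuous_on UNIV (dtr a b e)" "continuous_on UNIV (tr a b e)"
    using dtr_cont[OF ab(2)] tr_cont[OF ab(2)] by auto
  have c2: "continuous_on UNIV (dtr p q d)" "continuous_on UNIV (tr p q d)"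
    using dtr_cont[OF pq(1)] tr_cont[OF pq(1)] by auto
  show "continuous_on UNIV (\<lambda>x::real\<times>real. dtr a b e (fst x) * tr p q d (snd x))"
    by (intro continuous_on_mult cont_fst cont_snd c1 c2)
  show "continuous_on UNIV (\<lambda>x::real\<times>real. tr a b e (fst x) * dtr p q d (snd x))"
    by (intro continuous_on_mult cont_fst cont_snd c1 c2)
  define Bx where "Bx = {a - e..b + e} \<times> {p - d..q + d}"
  have sub: "closure {x. tr a b e (fst x) * tr p q d (snd x) \<noteq> 0} \<subseteq> Bx"
  proof (rule closure_minimal)
    show "{x. tr a b e (fst x) * tr p q d (snd x) \<noteq> 0} \<subseteq> Bx"
    proof
      fix x assume "x \<in> {x. tr a b e (fst x) * tr p q d (snd x) \<noteq> 0}"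
      then have "tr a b e (fst x) \<noteq> 0" "tr p q d (snd x) \<noteq> 0" by auto
      then have "fst x \<in> {a - e..b + e}" "snd x \<in> {p - d..q + d}"
      proof -
        show "fst x \<in> {a - e..b + e}"
        proof (rule ccontr)
          assume "fst x \<notin> {a - e..b + e}"
          then have "fst x \<le> a - e \<or> b + e \<le> fst x" by auto
          then show False using tr_zero[OF ab(2) ab(1), of "fst x"] \<open>tr a b e (fst x) \<noteq> 0\<close> by blast
        qed
        show "snd x \<in> {p - d..q + d}"
        proof (rule ccontr)
          assume "snd x \<notin> {p - d..q + d}"
          then have "snd x \<le> p - d \<or> q + d \<le> snd x" by auto
          then show False using tr_zero[OF pq(1,2), of "snd x"] \<open>tr p q d (snd x) \<noteq> 0\<close> by blast
        qed
      qed
      then show "x \<in> Bx" unfolding Bx_def by (simp add: mem_Times_iff)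
    qed
    show "closed Bx" unfolding Bx_def by (intro closed_Times closed_atLeastAtMost)
  qed
  have cB: "compact Bx" unfolding Bx_def by (intro compact_Times compact_Icc)
  have "closure {x. tr a b e (fst x) * tr p q d (snd x) \<noteq> 0} = Bx \<inter> closure {x. tr a b e (fst x) * tr p q d (snd x) \<noteq> 0}"
    using sub by blast
  moreover have "compact (Bx \<inter> closure {x. tr a b e (fst x) * tr p q d (snd x) \<noteq> 0})"
    by (rule compact_Int_closed[OF cB closed_closure])
  ultimately show "compact (closure {x. tr a b e (fst x) * tr p q d (snd x) \<noteq> 0})"
    by simp
  have "Bx \<subseteq> strip" unfolding Bx_def strip_def using pq by (auto simp: mem_Times_iff)
  then show "closure {x. tr a b e (fst x) * tr p q d (snd x) \<noteq> 0} \<subseteq> strip" using sub by blast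
qed

lemma strip_int:
  fixes f :: "real \<times> real \<Rightarrow> real \<times> real" and k :: "real \<times> real \<Rightarrow> real"
  assumes L2: "L2_strip f" and km: "k \<in> borel_measurable borel" and kb: "\<And>x. \<bar>k x\<bar> \<le> C"
    and ks: "\<And>x. k x \<noteq> 0 \<Longrightarrow> fst x \<in> {A..B}"
  shows "integrable lborel (\<lambda>x. indicator strip x *\<^sub>R (k x *\<^sub>R f x))"
proof (rule Bochner_Integration.integrable_bound)
  define Bx where "Bx = {A..B} \<times> {-1..1::real}"
  have fm: "(\<lambda>x. indicator strip x *\<^sub>R f x) \<in> borel_measurable lborel"
    using L2 unfolding L2_strip_def set_borel_measurable_def by simp
  have f2: "integrable lborel (\<lambda>x. indicator strip x *\<^sub>R (norm (f x))^2)"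
    using L2 unfolding L2_strip_def set_integrable_def by simp
  have Bi: "integrable lborel (indicator Bx :: real \<times> real \<Rightarrow> real)"
  proof (rule integrable_real_indicator)
    show "Bx \<in> sets lborel" unfolding Bx_def by (simp add: borel_closed closed_Times)
    show "emeasure lborel Bx < \<infinity>" unfolding Bx_def by (intro emeasure_bounded_finite bounded_Times bounded_closed_interval)
  qed
  show "integrable lborel (\<lambda>x. C * (indicator Bx x + indicator strip x *\<^sub>R (norm (f x))^2))"
    using Bi f2 by (intro integrable_mult_right Bochner_Integration.integrable_add)
  have fm': "(\<lambda>x. indicator strip x *\<^sub>R f x) \<in> borel_measurable borel" using fm by simp
  have "(\<lambda>x. k x *\<^sub>R (indicator strip x *\<^sub>R f x)) \<in> borel_measurable borel"
    by (rule borel_measurable_scaleR[OF km fm'])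
  then show "(\<lambda>x. indicator strip x *\<^sub>R (k x *\<^sub>R f x)) \<in> borel_measurable lborel"
    by (simp add: scaleR_left_commute mult.commute)
  have C0: "0 \<le> C" using kb[of 0] by linarith
  show "AE x in lborel. norm (indicator strip x *\<^sub>R (k x *\<^sub>R f x)) \<le> norm (C * (indicator Bx x + indicator strip x *\<^sub>R (norm (f x))^2))"
  proof (intro AE_I2)
    fix x :: "real \<times> real"
    show "norm (indicator strip x *\<^sub>R (k x *\<^sub>R f x)) \<le> norm (C * (indicator Bx x + indicator strip x *\<^sub>R (norm (f x))^2))"
    proof (cases "x \<in> strip \<and> k x \<noteq> 0")
      case True
      then have xB: "x \<in> Bx" using ks[of x] unfolding Bx_def strip_def by (cases x) auto
      have n: "norm (f x) \<le> 1 + (norm (f x))^2"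
        using zero_le_power2[of "norm (f x) - 1/2"] by (simp add: power2_eq_square algebra_simps)
      have "norm (indicator strip x *\<^sub>R (k x *\<^sub>R f x)) = \<bar>k x\<bar> * norm (f x)" using True by simp
      also have "\<dots> \<le> C * (1 + (norm (f x))^2)" using kb[of x] n by (intro mult_mono) auto
      also have "\<dots> = norm (C * (indicator Bx x + indicator strip x *\<^sub>R (norm (f x))^2))"
        using True xB C0 by simp
      finally show ?thesis .
    next
      case False
      then show ?thesis by (auto split: split_indicator)
    qed
  qed
qed

lemma fub:
  fixes F :: "real \<times> real \<Rightarrow> real"
  assumes "integrable lborel F"
  shows "integral\<^sup>L lborel F = (\<integral>x1. (\<integral>x2. F (x1, x2) \<partial>lborel) \<partial>lborel)"
    and "integrable lborel (\<lambda>x1. \<integral>x2. F (x1, x2) \<partial>lborel)"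
    and "AE x1 in lborel. integrable lborel (\<lambda>x2. F (x1, x2))"
proof -
  have i: "integrable (lborel \<Otimes>\<^sub>M lborel) F" using assms by (simp add: lborel_prod)
  show "integral\<^sup>L lborel F = (\<integral>x1. (\<integral>x2. F (x1, x2) \<partial>lborel) \<partial>lborel)"
    using lborel_pair.integral_fst'[OF i] by (simp add: lborel_prod)
  show "integrable lborel (\<lambda>x1. \<integral>x2. F (x1, x2) \<partial>lborel)"
    using lborel_pair.integrable_fst'[OF i] .
  show "AE x1 in lborel. integrable lborel (\<lambda>x2. F (x1, x2))"
    using lborel_pair.AE_integrable_fst'[OF i] .
qed

lemma strip_int_c:
  fixes f :: "real \<times> real \<Rightarrow> real \<times> real" and k :: "real \<times> real \<Rightarrow> real"
  assumes c: "bounded_linear c" and L2: "L2_strip f" and km: "k \<in> borel_measurable borel" and kb: "\<And>x. \<bar>k x\<bar> \<le> C"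
    and ks: "\<And>x. k x \<noteq> 0 \<Longrightarrow> fst x \<in> {A..B}"
  shows "integrable lborel (\<lambda>x. k x * (indicator strip x * c (f x)))"
proof -
  interpret c: bounded_linear c by fact
  have "integrable lborel (\<lambda>x. c (indicator strip x *\<^sub>R (k x *\<^sub>R f x)))"
    by (rule integrable_bounded_linear[OF c strip_int[OF L2 km kb ks]])
  then show ?thesis by (simp add: c.scale mult.assoc mult.left_commute)
qed

lemma tr_abs: "0 < e \<Longrightarrow> a \<le> b \<Longrightarrow> \<bar>tr a b e s\<bar> \<le> 1"
  using tr_bounds[of e a b s] by auto

lemma tr_supp: "0 < e \<Longrightarrow> a \<le> b \<Longrightarrow> tr a b e s \<noteq> 0 \<Longrightarrow> s \<in> {a - e..b + e}"
  using tr_zero[of e a b s] by force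

lemma dtr_supp: "0 < e \<Longrightarrow> a \<le> b \<Longrightarrow> dtr a b e s \<noteq> 0 \<Longrightarrow> s \<in> {a - e..b + e}"
  using dtr_zero[of e a b s] by force

lemma cont_meas: "continuous_on UNIV f \<Longrightarrow> f \<in> borel_measurable borel"
  by (rule borel_measurable_continuous_onI)

lemma weak_comp:
  assumes H: "H1_strip_zero_trace v d1v d2v" and c: "bounded_linear c"
    and ab: "a \<le> b" "0 < e" and pq: "0 < d" "p \<le> q" "-1 < p - d" "q + d < 1"
  shows "integral\<^sup>L lborel (\<lambda>x. (tr a b e (fst x) * dtr p q d (snd x)) * (indicator strip x * c (v x)))
    = - integral\<^sup>L lborel (\<lambda>x. (tr a b e (fst x) * tr p q d (snd x)) * (indicator strip x * c (d2v x)))"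
proof -
  interpret c: bounded_linear c by fact
  have L2: "L2_strip v" "L2_strip d2v" using H unfolding H1_strip_zero_trace_def by auto
  define k1 where "k1 x = tr a b e (fst x) * dtr p q d (snd x)" for x :: "real \<times> real"
  define k2 where "k2 x = tr a b e (fst x) * tr p q d (snd x)" for x :: "real \<times> real"
  have w: "(LINT x:strip|lborel. k1 x *\<^sub>R v x) = - (LINT x:strip|lborel. k2 x *\<^sub>R d2v x)"
    using H prod_test[OF ab pq] unfolding H1_strip_zero_trace_def weak_d2_def k1_def k2_def by blast
  have m1: "k1 \<in> borel_measurable borel" unfolding k1_def
    by (intro cont_meas continuous_on_mult cont_fst cont_snd tr_cont dtr_cont ab pq)
  have m2: "k2 \<in> borel_measurable borel" unfolding k2_def
    by (intro cont_meas continuous_on_mult cont_fst cont_snd tr_cont ab pq)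
  have b1: "\<bar>k1 x\<bar> \<le> 1 * (3 / d)" for x unfolding k1_def abs_mult
    by (intro mult_mono tr_abs dtr_bound ab pq) auto
  have b2: "\<bar>k2 x\<bar> \<le> 1 * 1" for x unfolding k2_def abs_mult
    by (intro mult_mono tr_abs ab pq) auto
  have s1: "fst x \<in> {a - e..b + e}" if "k1 x \<noteq> 0" for x
    using that tr_supp[OF ab(2,1)] unfolding k1_def by auto
  have s2: "fst x \<in> {a - e..b + e}" if "k2 x \<noteq> 0" for x
    using that tr_supp[OF ab(2,1)] unfolding k2_def by auto
  have i1: "integrable lborel (\<lambda>x. indicator strip x *\<^sub>R (k1 x *\<^sub>R v x))"
    by (rule strip_int[OF L2(1) m1 b1 s1])
  have i2: "integrable lborel (\<lambda>x. indicator strip x *\<^sub>R (k2 x *\<^sub>R d2v x))"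
    by (rule strip_int[OF L2(2) m2 b2 s2])
  have "integral\<^sup>L lborel (\<lambda>x. c (indicator strip x *\<^sub>R (k1 x *\<^sub>R v x)))
      = c (LINT x:strip|lborel. k1 x *\<^sub>R v x)"
    unfolding set_lebesgue_integral_def by (rule integral_bounded_linear[OF c i1])
  also have "\<dots> = c (- (LINT x:strip|lborel. k2 x *\<^sub>R d2v x))" using w by (rule arg_cong)
  also have "\<dots> = - c (LINT x:strip|lborel. k2 x *\<^sub>R d2v x)" by (rule c.neg)
  also have "c (LINT x:strip|lborel. k2 x *\<^sub>R d2v x) = integral\<^sup>L lborel (\<lambda>x. c (indicator strip x *\<^sub>R (k2 x *\<^sub>R d2v x)))"
    unfolding set_lebesgue_integral_def by (rule integral_bounded_linear[OF c i2, symmetric])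
  finally have "integral\<^sup>L lborel (\<lambda>x. c (indicator strip x *\<^sub>R (k1 x *\<^sub>R v x)))
      = - integral\<^sup>L lborel (\<lambda>x. c (indicator strip x *\<^sub>R (k2 x *\<^sub>R d2v x)))" .
  then show ?thesis unfolding k1_def k2_def by (simp add: c.scale mult.assoc mult.left_commute)
qed

lemma meas_fst: "k \<in> borel_measurable borel \<Longrightarrow> (\<lambda>x::real\<times>real. k (fst x)) \<in> borel_measurable borel"
  by (rule measurable_compose[OF cont_meas[OF continuous_on_fst[OF continuous_on_id]]])
lemma meas_snd: "k \<in> borel_measurable borel \<Longrightarrow> (\<lambda>x::real\<times>real. k (snd x)) \<in> borel_measurable borel"
  by (rule measurable_compose[OF cont_meas[OF continuous_on_snd[OF continuous_on_id]]])

lemma comp_meas: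
  fixes c :: "real \<times> real \<Rightarrow> real"
  assumes c: "bounded_linear c" and L2: "L2_strip f"
  shows "(\<lambda>x. indicator strip x * c (f x)) \<in> borel_measurable borel"
proof -
  interpret c: bounded_linear c by fact
  have fm: "(\<lambda>x. indicator strip x *\<^sub>R f x) \<in> borel_measurable borel"
    using L2 unfolding L2_strip_def set_borel_measurable_def by simp
  have "(\<lambda>x. c (indicator strip x *\<^sub>R f x)) \<in> borel_measurable borel"
    by (rule measurable_compose[OF fm cont_meas[OF linear_continuous_on[OF c]]])
  then show ?thesis by (simp add: c.scale)
qed

lemma G_ae:
  assumes H: "H1_strip_zero_trace v d1v d2v" and c: "bounded_linear c"
    and pq: "0 < d" "p \<le> q" "-1 < p - d" "q + d < 1"
  shows "AE x1 in lborel. (\<integral>x2. dtr p q d x2 * (indicator strip (x1,x2) * c (v (x1,x2)))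
      + tr p q d x2 * (indicator strip (x1,x2) * c (d2v (x1,x2))) \<partial>lborel) = 0"
proof -
  interpret c: bounded_linear c by fact
  have L2: "L2_strip v" "L2_strip d2v" using H unfolding H1_strip_zero_trace_def by auto
  define S where "S x = dtr p q d (snd x) * (indicator strip x * c (v x)) + tr p q d (snd x) * (indicator strip x * c (d2v x))"
    for x :: "real \<times> real"
  define G where "G x1 = (\<integral>x2. S (x1,x2) \<partial>lborel)" for x1
  have dm: "dtr p q d \<in> borel_measurable borel" "tr p q d \<in> borel_measurable borel"
    using cont_meas[OF dtr_cont[OF pq(1)]] cont_meas[OF tr_cont[OF pq(1)]] by auto
  have Vm: "(\<lambda>x. indicator strip x * c (v x)) \<in> borel_measurable borel" by (rule comp_meas[OF c L2(1)])
  have Wm: "(\<lambda>x. indicator strip x * c (d2v x)) \<in> borel_measurable borel" by (rule comp_meas[OF c L2(2)])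
  have Sm: "S \<in> borel_measurable borel" unfolding S_def
    using meas_snd[OF dm(1)] meas_snd[OF dm(2)] Vm Wm by measurable
  have split: "k (fst x) * S x = (k (fst x) * dtr p q d (snd x)) * (indicator strip x * c (v x))
      + (k (fst x) * tr p q d (snd x)) * (indicator strip x * c (d2v x))" for k x
    unfolding S_def by (simp add: algebra_simps)
  have int1: "integrable lborel (\<lambda>x. (k (fst x) * dtr p q d (snd x)) * (indicator strip x * c (v x)))"
    and int2: "integrable lborel (\<lambda>x. (k (fst x) * tr p q d (snd x)) * (indicator strip x * c (d2v x)))"
    if km: "k \<in> borel_measurable borel" and kb: "\<And>s. \<bar>k s\<bar> \<le> 1" and ks: "\<And>s. k s \<noteq> 0 \<Longrightarrow> s \<in> {A..B}" for k A B
  proof -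
    show "integrable lborel (\<lambda>x. (k (fst x) * dtr p q d (snd x)) * (indicator strip x * c (v x)))"
    proof (rule strip_int_c[OF c L2(1), where C="1 * (3/d)" and A=A and B=B])
      show "(\<lambda>x. k (fst x) * dtr p q d (snd x)) \<in> borel_measurable borel"
        using meas_fst[OF km] meas_snd[OF dm(1)] by measurable
      show "\<bar>k (fst x) * dtr p q d (snd x)\<bar> \<le> 1 * (3 / d)" for x
        unfolding abs_mult by (intro mult_mono kb dtr_bound pq) auto
      show "fst x \<in> {A..B}" if "k (fst x) * dtr p q d (snd x) \<noteq> 0" for x
        using that ks by auto
    qed
    show "integrable lborel (\<lambda>x. (k (fst x) * tr p q d (snd x)) * (indicator strip x * c (d2v x)))"
    proof (rule strip_int_c[OF c L2(2), where C="1 * 1" and A=A and B=B])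
      show "(\<lambda>x. k (fst x) * tr p q d (snd x)) \<in> borel_measurable borel"
        using meas_fst[OF km] meas_snd[OF dm(2)] by measurable
      show "\<bar>k (fst x) * tr p q d (snd x)\<bar> \<le> 1 * 1" for x
        unfolding abs_mult by (intro mult_mono kb tr_abs pq) auto
      show "fst x \<in> {A..B}" if "k (fst x) * tr p q d (snd x) \<noteq> 0" for x
        using that ks by auto
    qed
  qed
  have intS: "integrable lborel (\<lambda>x. k (fst x) * S x)"
    if km: "k \<in> borel_measurable borel" and kb: "\<And>s. \<bar>k s\<bar> \<le> 1" and ks: "\<And>s. k s \<noteq> 0 \<Longrightarrow> s \<in> {A..B}" for k A B
    unfolding split using int1[OF that] int2[OF that] by (rule Bochner_Integration.integrable_add)
  have Gfub: "(\<integral>x1. k x1 * G x1 \<partial>lborel) = integral\<^sup>L lborel (\<lambda>x. k (fst x) * S x)"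
    and Gfubi: "integrable lborel (\<lambda>x1. k x1 * G x1)"
    if km: "k \<in> borel_measurable borel" and kb: "\<And>s. \<bar>k s\<bar> \<le> 1" and ks: "\<And>s. k s \<noteq> 0 \<Longrightarrow> s \<in> {A..B}" for k A B
  proof -
    have e: "(\<lambda>x1. \<integral>x2. k (fst (x1, x2)) * S (x1, x2) \<partial>lborel) = (\<lambda>x1. k x1 * G x1)"
      unfolding G_def by simp
    show "(\<integral>x1. k x1 * G x1 \<partial>lborel) = integral\<^sup>L lborel (\<lambda>x. k (fst x) * S x)"
      using fub(1)[OF intS[OF that]] unfolding e by simp
    show "integrable lborel (\<lambda>x1. k x1 * G x1)"
      using fub(2)[OF intS[OF that]] unfolding e .
  qed
  have Gm: "G \<in> borel_measurable borel"
  proof -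
    have "(\<lambda>(x1, x2). S (x1, x2)) \<in> borel_measurable (lborel \<Otimes>\<^sub>M lborel)"
      using Sm by (simp add: lborel_prod)
    then have "(\<lambda>x1. \<integral>x2. S (x1, x2) \<partial>lborel) \<in> borel_measurable lborel"
      by (rule sigma_finite_measure.borel_measurable_lebesgue_integral[OF sigma_finite_lborel])
    then show ?thesis unfolding G_def by simp
  qed
  have Gi: "set_integrable lborel {a..b} G" for a b
  proof -
    have "integrable lborel (\<lambda>x1. indicator {a..b} x1 * G x1)"
      by (rule Gfubi[where A=a and B=b]) (auto simp: indicator_def split: if_splits)
    then show ?thesis unfolding set_integrable_def by simp
  qed
  have G0: "(LBINT t:{a..b}. G t) = 0" if ab: "a \<le> b" for a b
  proof -
    define dn where "dn n = inverse (real (Suc n))" for n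
    have dpos: "0 < dn n" for n unfolding dn_def by simp
    have dle: "dn n \<le> 1" for n unfolding dn_def by (simp add: inverse_le_1_iff)
    have dlim: "dn \<longlonglongrightarrow> 0" unfolding dn_def by (rule LIMSEQ_inverse_real_of_nat)
    have trm: "tr a b (dn n) \<in> borel_measurable borel" for n by (rule cont_meas[OF tr_cont[OF dpos]])
    have trb: "\<bar>tr a b (dn n) s\<bar> \<le> 1" for n s by (rule tr_abs[OF dpos ab])
    have trs: "s \<in> {a - 1..b + 1}" if "tr a b (dn n) s \<noteq> 0" for n s
      using tr_supp[OF dpos ab that] dle[of n] by auto
    have In: "(\<integral>x1. tr a b (dn n) x1 * G x1 \<partial>lborel) = 0" for n
    proof -
      have "(\<integral>x1. tr a b (dn n) x1 * G x1 \<partial>lborel) = integral\<^sup>L lborel (\<lambda>x. tr a b (dn n) (fst x) * S x)"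
        by (rule Gfub[OF trm trb trs])
      also have "\<dots> = integral\<^sup>L lborel (\<lambda>x. (tr a b (dn n) (fst x) * dtr p q d (snd x)) * (indicator strip x * c (v x)))
          + integral\<^sup>L lborel (\<lambda>x. (tr a b (dn n) (fst x) * tr p q d (snd x)) * (indicator strip x * c (d2v x)))"
        unfolding split by (rule Bochner_Integration.integral_add[OF int1[OF trm trb trs] int2[OF trm trb trs]])
      also have "\<dots> = 0" using weak_comp[OF H c ab dpos pq] by simp
      finally show ?thesis .
    qed
    have lim: "(\<lambda>n. \<integral>x1. tr a b (dn n) x1 * G x1 \<partial>lborel) \<longlonglongrightarrow> (\<integral>x1. indicator {a..b} x1 * G x1 \<partial>lborel)"
    proof (rule integral_dominated_convergence[where w="\<lambda>x1. indicator {a-1..b+1} x1 * \<bar>G x1\<bar>"])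
      show "(\<lambda>x1. indicator {a..b} x1 * G x1) \<in> borel_measurable lborel" using Gm by simp
      show "(\<lambda>x1. tr a b (dn n) x1 * G x1) \<in> borel_measurable lborel" for n using Gm trm[of n] by simp
      have "set_integrable lborel {a-1..b+1} (\<lambda>x. \<bar>G x\<bar>)" by (rule set_integrable_abs[OF Gi])
      then show "integrable lborel (\<lambda>x1. indicator {a-1..b+1} x1 * \<bar>G x1\<bar>)"
        unfolding set_integrable_def by simp
      show "AE x1 in lborel. (\<lambda>n. tr a b (dn n) x1 * G x1) \<longlonglongrightarrow> indicator {a..b} x1 * G x1"
        by (intro AE_I2 tendsto_mult tendsto_const tr_lim[OF ab dpos dlim])
      show "AE x1 in lborel. norm (tr a b (dn n) x1 * G x1) \<le> indicator {a-1..b+1} x1 * \<bar>G x1\<bar>" for n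
      proof (intro AE_I2)
        fix x1 :: real
        show "norm (tr a b (dn n) x1 * G x1) \<le> indicator {a-1..b+1} x1 * \<bar>G x1\<bar>"
        proof (cases "tr a b (dn n) x1 = 0")
          case True then show ?thesis by (simp split: split_indicator)
        next
          case False
          then have "x1 \<in> {a-1..b+1}" by (rule trs)
          then show ?thesis using trb[of n x1] by (simp add: abs_mult mult_left_le_one_le)
        qed
      qed
    qed
    have "(\<integral>x1. indicator {a..b} x1 * G x1 \<partial>lborel) = 0"
      using LIMSEQ_unique[OF lim] In by simp
    then show ?thesis unfolding set_lebesgue_integral_def by simp
  qed
  have "AE x1 in lborel. G x1 = 0" by (rule ae_zero_intervals[OF Gm Gi G0])
  then show ?thesis unfolding G_def S_def by simp
qed

lemma meas_slice: "f \<in> borel_measurable borel \<Longrightarrow> (\<lambda>t. f (x1::real, t::real)) \<in> borel_measurable borel"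
  by (rule measurable_compose[OF cont_meas[of "\<lambda>t. (x1, t)"]]) (auto intro!: continuous_intros)

lemma ind_strip: "indicator strip (x1, t) = (indicator {-1<..<1} t :: real)"
  by (auto simp: strip_def split: split_indicator)

lemma slice_good:
  fixes c :: "real \<times> real \<Rightarrow> real"
  assumes H: "H1_strip_zero_trace v d1v d2v" and c: "bounded_linear c" and cb: "\<And>z. \<bar>c z\<bar> \<le> norm z"
  shows "AE x1 in lborel. (\<forall>t\<in>{-1..1}. (c (v (x1,t)))^2 \<le> 2 * (LBINT t:{-1<..<1}. (c (d2v (x1,t)))^2))
      \<and> 2 * (c (v (x1,0)))^2 \<le> (LBINT t:{-1<..<1}. (c (d2v (x1,t)))^2)"
proof -
  interpret c: bounded_linear c by fact
  have L2: "L2_strip v" "L2_strip d2v" using H unfolding H1_strip_zero_trace_def by auto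
  define W where "W x = indicator strip x * c (d2v x)" for x
  have Wm: "W \<in> borel_measurable borel" unfolding W_def by (rule comp_meas[OF c L2(2)])
  have W2: "integrable lborel (\<lambda>x. (W x)^2)"
  proof (rule Bochner_Integration.integrable_bound)
    show "integrable lborel (\<lambda>x. indicator strip x *\<^sub>R (norm (d2v x))^2)"
      using L2(2) unfolding L2_strip_def set_integrable_def by simp
    show "(\<lambda>x. (W x)^2) \<in> borel_measurable lborel" using Wm by simp
    show "AE x in lborel. norm ((W x)^2) \<le> norm (indicator strip x *\<^sub>R (norm (d2v x))^2)"
    proof (intro AE_I2)
      fix x
      have "(c (d2v x))^2 \<le> (norm (d2v x))^2"
        using cb[of "d2v x"] by (metis abs_ge_zero power2_abs power_mono)
      then show "norm ((W x)^2) \<le> norm (indicator strip x *\<^sub>R (norm (d2v x))^2)"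
        unfolding W_def by (auto split: split_indicator)
    qed
  qed
  have A1: "AE x1 in lborel. \<forall>p\<in>\<rat>. \<forall>q\<in>\<rat>. \<forall>d\<in>\<rat>. (0 < d \<and> p \<le> q \<and> -1 < p - d \<and> q + d < 1) \<longrightarrow>
      (\<integral>x2. dtr p q d x2 * (indicator strip (x1,x2) * c (v (x1,x2)))
      + tr p q d x2 * (indicator strip (x1,x2) * c (d2v (x1,x2))) \<partial>lborel) = 0"
    using G_ae[OF H c] by (simp add: AE_ball_countable countable_rat)
  have A2: "AE x1 in lborel. continuous_on {-1..1} (\<lambda>t. v (x1, t)) \<and> v (x1, -1) = 0 \<and> v (x1, 1) = 0"
    using H unfolding H1_strip_zero_trace_def by auto
  have A3: "AE x1 in lborel. integrable lborel (\<lambda>x2. (W (x1, x2))^2)"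
    using fub(3)[OF W2] .
  from A1 A2 A3 show ?thesis
  proof eventually_elim
    case (elim x1)
    define u where "u t = c (v (x1, t))" for t
    define w where "w t = c (d2v (x1, t))" for t
    have cu: "continuous_on {-1..1} u" unfolding u_def
      using elim(2) by (intro continuous_on_compose2[OF linear_continuous_on[OF c]]) auto
    have wW: "W (x1, t) = indicator {-1<..<1} t * w t" for t unfolding W_def w_def ind_strip ..
    have wm: "set_borel_measurable lborel {-1<..<1} w"
    proof -
      have "(\<lambda>t. W (x1, t)) \<in> borel_measurable borel" by (rule meas_slice[OF Wm])
      then show ?thesis unfolding set_borel_measurable_def wW by simp
    qed
    have w2: "set_integrable lborel {-1<..<1} (\<lambda>t. (w t)^2)"
    proof -
      have "(\<lambda>x2. (W (x1, x2))^2) = (\<lambda>t. indicator {-1<..<1} t *\<^sub>R (w t)^2)"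
        unfolding wW by (auto simp: power2_eq_square split: split_indicator)
      then show ?thesis using elim(3) unfolding set_integrable_def by simp
    qed
    have u0: "u (-1) = 0" "u 1 = 0" unfolding u_def using elim(2) c.zero by auto
    have weak: "(LBINT t:{-1<..<1}. dtr p q d t * u t) = - (LBINT t:{-1<..<1}. tr p q d t * w t)"
      if pqd: "p \<in> \<rat>" "q \<in> \<rat>" "d \<in> \<rat>" "0 < d" "p \<le> q" "-1 < p - d" "q + d < 1" for p q d
    proof -
      have z: "(\<integral>x2. dtr p q d x2 * (indicator {-1<..<1} x2 * u x2) + tr p q d x2 * (indicator {-1<..<1} x2 * w x2) \<partial>lborel) = 0"
        using elim(1) pqd unfolding u_def w_def ind_strip by blast
      have i1: "integrable lborel (\<lambda>x2. dtr p q d x2 * (indicator {-1<..<1} x2 * u x2))"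
      proof -
        have "set_integrable lborel {-1..1} (\<lambda>t. dtr p q d t * u t)"
          by (rule borel_integrable_atLeastAtMost') (intro continuous_on_mult dtr_cont pqd cu)
        then have "set_integrable lborel {-1<..<1} (\<lambda>t. dtr p q d t * u t)"
          by (rule set_integrable_subset) auto
        then show ?thesis unfolding set_integrable_def by (simp add: algebra_simps)
      qed
      have i2: "integrable lborel (\<lambda>x2. tr p q d x2 * (indicator {-1<..<1} x2 * w x2))"
      proof (rule Bochner_Integration.integrable_bound)
        have ic: "set_integrable lborel {-1<..<1::real} (\<lambda>_. 1::real)"
        proof -
          have "set_integrable lborel {-1..1::real} (\<lambda>_. 1::real)"
            by (rule borel_integrable_atLeastAtMost') simp
          then show ?thesis by (rule set_integrable_subset) auto
        qed
        have "set_integrable lborel {-1<..<1} (\<lambda>t. 1 + (w t)^2)" using ic w2 by (rule set_integral_add(1))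
        then show "integrable lborel (\<lambda>t. indicator {-1<..<1} t *\<^sub>R (1 + (w t)^2))"
          unfolding set_integrable_def .
        have "(\<lambda>t. tr p q d t * (indicator {-1<..<1} t *\<^sub>R w t)) \<in> borel_measurable lborel"
          using wm cont_meas[OF tr_cont[OF pqd(4)]] unfolding set_borel_measurable_def by measurable
        then show "(\<lambda>x2. tr p q d x2 * (indicator {-1<..<1} x2 * w x2)) \<in> borel_measurable lborel" by simp
        show "AE x in lborel. norm (tr p q d x * (indicator {-1<..<1} x * w x)) \<le> norm (indicator {-1<..<1} x *\<^sub>R (1 + (w x)^2))"
        proof (intro AE_I2)
          fix x :: real
          have "\<bar>w x\<bar> \<le> 1 + (w x)^2"
            using zero_le_power2[of "\<bar>w x\<bar> - 1/2"] by (simp add: power2_eq_square algebra_simps)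
          moreover have "\<bar>tr p q d x\<bar> \<le> 1" by (rule tr_abs) (use pqd in auto)
          ultimately have "\<bar>tr p q d x\<bar> * \<bar>w x\<bar> \<le> 1 * (1 + (w x)^2)"
            by (intro mult_mono) auto
          then show "norm (tr p q d x * (indicator {-1<..<1} x * w x)) \<le> norm (indicator {-1<..<1} x *\<^sub>R (1 + (w x)^2))"
            by (auto simp: abs_mult split: split_indicator)
        qed
      qed
      have e1: "(LBINT t:{-1<..<1}. dtr p q d t * u t) = (\<integral>x2. dtr p q d x2 * (indicator {-1<..<1} x2 * u x2) \<partial>lborel)"
        unfolding set_lebesgue_integral_def by (rule Bochner_Integration.integral_cong) (auto simp: mult.left_commute)
      have e2: "(LBINT t:{-1<..<1}. tr p q d t * w t) = (\<integral>x2. tr p q d x2 * (indicator {-1<..<1} x2 * w x2) \<partial>lborel)"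
        unfolding set_lebesgue_integral_def by (rule Bochner_Integration.integral_cong) (auto simp: mult.left_commute)
      have "(LBINT t:{-1<..<1}. dtr p q d t * u t) + (LBINT t:{-1<..<1}. tr p q d t * w t) = 0"
        unfolding e1 e2 using z Bochner_Integration.integral_add[OF i1 i2] by simp
      then show ?thesis by simp
    qed
    have sb1: "\<And>x. x \<in> {-1..1} \<Longrightarrow> (u x)^2 \<le> 2 * (LBINT t:{-1<..<1}. (w t)^2)"
      and sb2: "2 * (u 0)^2 \<le> (LBINT t:{-1<..<1}. (w t)^2)"
      using slice_bounds[OF cu wm w2 weak u0] by blast+
    show ?case using sb1 sb2 unfolding u_def w_def by blast
  qed
qed

lemma norm2_pair: "(norm (z :: real \<times> real))^2 = (fst z)^2 + (snd z)^2"
  unfolding norm_prod_def by (simp add: power2_abs)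

lemma fst_le: "\<bar>fst (z::real\<times>real)\<bar> \<le> norm z"
  using norm_fst_le[of "fst z" "snd z"] by simp
lemma snd_le: "\<bar>snd (z::real\<times>real)\<bar> \<le> norm z"
  using norm_snd_le[of "snd z" "fst z"] by simp

lemma strip_fub:
  assumes "L2_strip f"
  shows "(LINT x:strip|lborel. (norm (f x))^2) = (\<integral>x1. (LBINT t:{-1<..<1}. (norm (f (x1, t)))^2) \<partial>lborel)"
    and "integrable lborel (\<lambda>x1. LBINT t:{-1<..<1}. (norm (f (x1, t)))^2)"
    and "AE x1 in lborel. set_integrable lborel {-1<..<1} (\<lambda>t. (norm (f (x1, t)))^2)"
proof -
  have i: "integrable lborel (\<lambda>x. indicator strip x *\<^sub>R (norm (f x))^2)"
    using assms unfolding L2_strip_def set_integrable_def by simp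
  have e: "(\<lambda>x1. \<integral>x2. indicator strip (x1, x2) *\<^sub>R (norm (f (x1, x2)))^2 \<partial>lborel) = (\<lambda>x1. LBINT t:{-1<..<1}. (norm (f (x1, t)))^2)"
    unfolding set_lebesgue_integral_def ind_strip ..
  show "(LINT x:strip|lborel. (norm (f x))^2) = (\<integral>x1. (LBINT t:{-1<..<1}. (norm (f (x1, t)))^2) \<partial>lborel)"
    using fub(1)[OF i] unfolding e set_lebesgue_integral_def[of lborel strip] .
  show "integrable lborel (\<lambda>x1. LBINT t:{-1<..<1}. (norm (f (x1, t)))^2)"
    using fub(2)[OF i] unfolding e .
  show "AE x1 in lborel. set_integrable lborel {-1<..<1} (\<lambda>t. (norm (f (x1, t)))^2)"
    using fub(3)[OF i] unfolding set_integrable_def ind_strip .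
qed

theorem lemma3p10:
  fixes g rho :: real and B :: "'b::real_normed_vector"
  assumes "g > 0" and "rho > 0" and "norm B > Bc g rho"
  shows "\<exists>C>0. \<forall>v d1v d2v. H1_strip_zero_trace v d1v d2v \<longrightarrow>
     (LINT x:strip|lborel. (norm B)^2 * (norm (d2v x))^2)
       - (LINT x1|lborel. g * rho * (snd (v (x1, 0)))^2)
     \<ge> (1 / C) * ((LINT x:strip|lborel. (norm (v x))^2) + (LINT x:strip|lborel. (norm (d2v x))^2))"
proof -
  have gr: "g * rho / 2 \<le> Bc_sq g rho" by (rule Bc_sq_ge[OF assms(1,2)])
  have Bgt: "(norm B)^2 > g * rho / 2"
  proof -
    have "sqrt (g * rho / 2) \<le> Bc g rho" unfolding Bc_def using gr by simp
    then have "sqrt (g * rho / 2) < norm B" using assms(3) by simp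
    then have "(sqrt (g * rho / 2))^2 < (norm B)^2" using assms(1,2) by (intro power_strict_mono) auto
    then show ?thesis using assms(1,2) by simp
  qed
  define \<kappa> where "\<kappa> = (norm B)^2 - g * rho / 2"
  have kpos: "\<kappa> > 0" using Bgt unfolding \<kappa>_def by simp
  show ?thesis
  proof (intro exI[of _ "5 / \<kappa>"] conjI allI impI)
    show "0 < 5 / \<kappa>" using kpos by simp
    fix v d1v d2v :: "real \<times> real \<Rightarrow> real \<times> real"
    assume H: "H1_strip_zero_trace v d1v d2v"
    have L2: "L2_strip v" "L2_strip d2v" using H unfolding H1_strip_zero_trace_def by auto
    define J where "J x1 = (LBINT t:{-1<..<1}. (norm (d2v (x1, t)))^2)" for x1
    define Jv where "Jv x1 = (LBINT t:{-1<..<1}. (norm (v (x1, t)))^2)" for x1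
    define Id where "Id = (LINT x:strip|lborel. (norm (d2v x))^2)"
    define Iv where "Iv = (LINT x:strip|lborel. (norm (v x))^2)"
    define T where "T = (LINT x1|lborel. g * rho * (snd (v (x1, 0)))^2)"
    have Id_eq: "Id = (\<integral>x1. J x1 \<partial>lborel)" unfolding Id_def J_def by (rule strip_fub(1)[OF L2(2)])
    have Iv_eq: "Iv = (\<integral>x1. Jv x1 \<partial>lborel)" unfolding Iv_def Jv_def by (rule strip_fub(1)[OF L2(1)])
    have Ji: "integrable lborel J" unfolding J_def by (rule strip_fub(2)[OF L2(2)])
    have Jvi: "integrable lborel Jv" unfolding Jv_def by (rule strip_fub(2)[OF L2(1)])
    have Id_pos: "0 \<le> Id" unfolding Id_def by (rule set_int_nonneg) simp
    have G1: "AE x1 in lborel. (\<forall>t\<in>{-1..1}. (fst (v (x1,t)))^2 \<le> 2 * (LBINT t:{-1<..<1}. (fst (d2v (x1,t)))^2))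
      \<and> 2 * (fst (v (x1,0)))^2 \<le> (LBINT t:{-1<..<1}. (fst (d2v (x1,t)))^2)"
      by (rule slice_good[OF H bounded_linear_fst fst_le])
    have G2: "AE x1 in lborel. (\<forall>t\<in>{-1..1}. (snd (v (x1,t)))^2 \<le> 2 * (LBINT t:{-1<..<1}. (snd (d2v (x1,t)))^2))
      \<and> 2 * (snd (v (x1,0)))^2 \<le> (LBINT t:{-1<..<1}. (snd (d2v (x1,t)))^2)"
      by (rule slice_good[OF H bounded_linear_snd snd_le])
    have G3: "AE x1 in lborel. set_integrable lborel {-1<..<1} (\<lambda>t. (norm (d2v (x1, t)))^2)"
      by (rule strip_fub(3)[OF L2(2)])
    have G4: "AE x1 in lborel. continuous_on {-1..1} (\<lambda>t. v (x1, t)) \<and> v (x1, -1) = 0 \<and> v (x1, 1) = 0"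
      using H unfolding H1_strip_zero_trace_def by auto
    have good: "AE x1 in lborel. Jv x1 \<le> 4 * J x1 \<and> g * rho * (snd (v (x1, 0)))^2 \<le> g * rho / 2 * J x1"
      using G1 G2 G3 G4
    proof eventually_elim
      case (elim x1)
      define w1 where "w1 t = fst (d2v (x1, t))" for t
      define w2 where "w2 t = snd (d2v (x1, t))" for t
      have sq: "set_integrable lborel {-1<..<1} (\<lambda>t. (w t)^2)"
        if wm: "(\<lambda>t. indicator {-1<..<1} t * w t) \<in> borel_measurable borel"
          and wb: "\<And>t. \<bar>w t\<bar> \<le> norm (d2v (x1, t))" for w
      proof (rule set_integrable_bound[OF elim(3)])
        have "(\<lambda>t. (indicator {-1<..<1} t * w t)^2) \<in> borel_measurable borel" using wm by measurable
        moreover have "(\<lambda>t. (indicator {-1<..<1} t * w t)^2) = (\<lambda>t. indicator {-1<..<1} t *\<^sub>R (w t)^2)"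
          by (auto split: split_indicator)
        ultimately show "set_borel_measurable lborel {-1<..<1} (\<lambda>t. (w t)^2)"
          unfolding set_borel_measurable_def by simp
        show "AE t in lborel. t \<in> {-1<..<1} \<longrightarrow> norm ((w t)^2) \<le> norm ((norm (d2v (x1, t)))^2)"
        proof (intro AE_I2 impI)
          fix t :: real
          have "(w t)^2 \<le> (norm (d2v (x1, t)))^2"
            using wb[of t] by (metis abs_ge_zero power2_abs power_mono)
          then show "norm ((w t)^2) \<le> norm ((norm (d2v (x1, t)))^2)" by simp
        qed
      qed
      have i1: "set_integrable lborel {-1<..<1} (\<lambda>t. (w1 t)^2)"
      proof (rule sq)
        show "(\<lambda>t. indicator {-1<..<1} t * w1 t) \<in> borel_measurable borel"
          using meas_slice[OF comp_meas[OF bounded_linear_fst L2(2)], of x1] unfolding ind_strip w1_def .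
        show "\<bar>w1 t\<bar> \<le> norm (d2v (x1, t))" for t unfolding w1_def by (rule fst_le)
      qed
      have i2: "set_integrable lborel {-1<..<1} (\<lambda>t. (w2 t)^2)"
      proof (rule sq)
        show "(\<lambda>t. indicator {-1<..<1} t * w2 t) \<in> borel_measurable borel"
          using meas_slice[OF comp_meas[OF bounded_linear_snd L2(2)], of x1] unfolding ind_strip w2_def .
        show "\<bar>w2 t\<bar> \<le> norm (d2v (x1, t))" for t unfolding w2_def by (rule snd_le)
      qed
      have JJ: "J x1 = (LBINT t:{-1<..<1}. (w1 t)^2) + (LBINT t:{-1<..<1}. (w2 t)^2)"
        unfolding J_def norm2_pair w1_def w2_def by (rule set_integral_add(2)) (use i1 i2 in \<open>auto simp: w1_def w2_def\<close>)
      have J1: "0 \<le> (LBINT t:{-1<..<1}. (w1 t)^2)" "0 \<le> (LBINT t:{-1<..<1}. (w2 t)^2)"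
        by (rule set_int_nonneg, simp)+
      have "Jv x1 \<le> (LBINT t:{-1<..<1::real}. 2 * J x1)"
        unfolding Jv_def
      proof (rule set_integral_mono)
        have "continuous_on {-1..1} (\<lambda>t. (norm (v (x1, t)))^2)"
          using elim(4) by (intro continuous_intros) auto
        then have "set_integrable lborel {-1..1} (\<lambda>t. (norm (v (x1, t)))^2)"
          by (rule borel_integrable_atLeastAtMost')
        then show "set_integrable lborel {-1<..<1} (\<lambda>t. (norm (v (x1, t)))^2)"
          by (rule set_integrable_subset) auto
        have "set_integrable lborel {-1..1::real} (\<lambda>t. 2 * J x1)"
          by (rule borel_integrable_atLeastAtMost') simp
        then show "set_integrable lborel {-1<..<1::real} (\<lambda>t. 2 * J x1)"
          by (rule set_integrable_subset) auto
        fix t :: real assume "t \<in> {-1<..<1}"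
        then have "(fst (v (x1,t)))^2 \<le> 2 * (LBINT t:{-1<..<1}. (w1 t)^2)" "(snd (v (x1,t)))^2 \<le> 2 * (LBINT t:{-1<..<1}. (w2 t)^2)"
          using elim(1,2) unfolding w1_def w2_def by auto
        then show "(norm (v (x1, t)))^2 \<le> 2 * J x1" unfolding norm2_pair JJ by simp
      qed
      also have "\<dots> = 4 * J x1" by (simp add: set_integral_const)
      finally have A: "Jv x1 \<le> 4 * J x1" .
      have "2 * (snd (v (x1,0)))^2 \<le> (LBINT t:{-1<..<1}. (w2 t)^2)" using elim(2) unfolding w2_def by auto
      then have "(snd (v (x1,0)))^2 \<le> J x1 / 2" using JJ J1 by simp
      then have "g * rho * (snd (v (x1,0)))^2 \<le> g * rho * (J x1 / 2)"
        using assms(1,2) by (intro mult_left_mono) auto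
      then show ?case using A by simp
    qed
    have Iv_le: "Iv \<le> 4 * Id"
    proof -
      have "Iv \<le> (\<integral>x1. 4 * J x1 \<partial>lborel)" unfolding Iv_eq
        by (rule integral_mono_AE[OF Jvi]) (use Ji good in \<open>auto elim: eventually_mono\<close>)
      then show ?thesis unfolding Id_eq by simp
    qed
    have T_le: "T \<le> g * rho / 2 * Id"
    proof (cases "integrable lborel (\<lambda>x1. g * rho * (snd (v (x1, 0)))^2)")
      case True
      have "T \<le> (\<integral>x1. g * rho / 2 * J x1 \<partial>lborel)" unfolding T_def
        by (rule integral_mono_AE[OF True]) (use Ji good in \<open>auto elim: eventually_mono\<close>)
      then show ?thesis unfolding Id_eq by simp
    next
      case False
      then have "T = 0" unfolding T_def by (rule not_integrable_integral_eq)
      then show ?thesis using Id_pos assms(1,2) by simp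
    qed
    have lhs: "(LINT x:strip|lborel. (norm B)^2 * (norm (d2v x))^2) = (norm B)^2 * Id"
      unfolding Id_def by simp
    have "1 / (5 / \<kappa>) * (Iv + Id) \<le> \<kappa> / 5 * (4 * Id + Id)"
      using Iv_le kpos by (simp add: mult_left_mono)
    also have "\<dots> = \<kappa> * Id" by simp
    also have "\<dots> \<le> (norm B)^2 * Id - T" using T_le unfolding \<kappa>_def by (simp add: algebra_simps)
    finally show "(LINT x:strip|lborel. (norm B)^2 * (norm (d2v x))^2) - (LINT x1|lborel. g * rho * (snd (v (x1, 0)))^2)
      \<ge> (1 / (5 / \<kappa>)) * ((LINT x:strip|lborel. (norm (v x))^2) + (LINT x:strip|lborel. (norm (d2v x))^2))"
      unfolding lhs T_def[symmetric] Iv_def[symmetric] Id_def[symmetric] by simp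
  qed
qed

end
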